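(* In iTML, suppose $T :: \rho,\mu_1,M \Rightarrow \mu_2,R$ and $x, x' \sqsubseteq (\rho,\mu_1,M,T)$. Then $\mathsf{fwd}_T(x \sqcap x') = \mathsf{fwd}_T(x) \sqcap \mathsf{fwd}_T(x')$, where $\mathsf{fwd}_T : \mathrm{Prefix}(\rho,\mu_1,M,T) \to \mathrm{Prefix}(\mu_2,R)$ sends each $(\rho',\mu',M',T')$ to the unique $(\mu'',R'')$ with $\rho',\mu',M',T' \nearrow \mu'',R''$.
   Context: Partial syntax of iTML ($\Box$ a hole). Expressions $e ::= x \mid () \mid \mathsf{inl}\,e \mid \mathsf{inr}\,e \mid (e_1,e_2) \mid \mathsf{fst}\,e \mid \mathsf{snd}\,e \mid \mathsf{fun}\,f(x).M \mid \Box$. Computations $M ::= \mathsf{return}\,e \mid \mathsf{let}\,x = M_1\,\mathsf{in}\,M_2 \mid e_1\,e_2 \mid \mathsf{case}\,e\,\mathsf{of}\,\{\mathsf{inl}\,x \to M_1; \mathsf{inr}\,y \to M_2\} \mid \mathsf{raise}\,e \mid \mathsf{try}\,M_1\,\mathsf{with}\,x \to M_2 \mid \mathsf{ref}\,e \mid e_1 := e_2 \mid !e \mid \Box$. Values $v ::= () \mid \mathsf{inl}\,v \mid \mathsf{inr}\,v \mid (v_1,v_2) \mid \langle\rho,\mathsf{fun}\,f(x).M\rangle \mid \ell \mid \Box$. Environments $\rho$ / stores $\mu$: finitely supported maps from variables / locations to values, regarded as total with value $\Box$ off their domain; $\rho[x\mapsto v]$ extends, $\mu[\ell\mapsto v]$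 updates. Outcomes $k ::= \mathsf{val}\mid\mathsf{exn}$; results $R ::= k\,v$. Traces $T ::= \mathsf{return}\,e \mid \mathsf{let_F}(T) \mid \mathsf{let_S}(T_1,x.T_2) \mid \mathsf{app}(e_1,e_2,f.x.T) \mid \mathsf{caseL}(e,x.T,y) \mid \mathsf{caseR}(e,x,y.T) \mid \mathsf{raise}\,e \mid \mathsf{try_S}(T) \mid \mathsf{try_F}(T_1,x.T_2) \mid \mathsf{ref}_\ell\,e \mid e_1:=_\ell e_2 \mid !_\ell\,e \mid \Box^k_{\mathcal{L}}$ ($\mathcal{L}$ a finite set of locations). $\mathsf{writes}(T)$: $\mathcal{L}$ for $\Box^k_{\mathcal{L}}$; $\emptyset$ for $\mathsf{return}\,e,\mathsf{raise}\,e,!_\ell e$; $\{\ell\}$ for $\mathsf{ref}_\ell e$, $e_1:=_\ell e_2$; union of both subtraces for $\mathsf{let_S}$, $\mathsf{try_F}$; that of the unique subtrace for $\mathsf{let_F},\mathsf{try_S},\mathsf{app},\mathsf{caseL},\mathsf{caseR}$. $\mathsf{outcome}(T)$: $k$ for $\Box^k_{\mathcal{L}}$; $\mathsf{val}$ for $\mathsf{return},\mathsf{try_S},\mathsf{ref}_\ell,:=_\ell,!_\ell$; $\mathsf{exn}$ for $\mathsf{let_F},\mathsf{raise}$; outcome of $T_2$ for $\mathsf{let_S}(T_1,x.T_2),\mathsf{try_F}(T_1,x.T_2)$; outcome of the subtrace for $\mathsf{app},\mathsf{caseL},\mathsf{caseR}$. Order $\sqsubseteq$: on expressions, computations, values the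 least order with $\Box\sqsubseteq t$ closed under constructors componentwise; $k\,v\sqsubseteq k\,v'$ iff $v\sqsubseteq v'$ (same $k$); pointwise on environments and stores; on traces the least order containing $\Box^k_{\mathcal{L}}\sqsubseteq T$ whenever $\mathsf{writes}(T)=\mathcal{L}$ and $\mathsf{outcome}(T)=k$, closed under trace constructors componentwise; componentwise on tuples. $\mathrm{Prefix}(t)=\{t'\mid t'\sqsubseteq t\}$ (a lattice; $\sqcap$ is the meet). Store erasure: $\mu\triangleleft\mathcal{L}$ is $\mu$ with every $\ell\in\mathcal{L}$ mapped to $\Box$. Evaluation (hole-free): $\rho,x\Rightarrow\rho(x)$; $()\Rightarrow()$; $\mathsf{fun}\,f(x).M\Rightarrow\langle\rho,\mathsf{fun}\,f(x).M\rangle$; $\mathsf{inl},\mathsf{inr}$, pairs componentwise; $\mathsf{fst},\mathsf{snd}$ project. $\mathsf{return}\,e::\rho,\mu,\mathsf{return}\,e\Rightarrow\mu,\mathsf{val}\,v$ if $\rho,e\Rightarrow v$; $\mathsf{app}(e_1,e_2,f.x.T)::\rho,\mu,e_1\,e_2\Rightarrow\mu',R$ if $\rho,e_1\Rightarrow v_1=\langle\rho',\mathsf{fun}\,f(x).M\rangle$, $\rho,e_2\Rightarrow v_2$, $T::\rho'[f\mapsto v_1][x\mapsto v_2],\mu,M\Rightarrow\mu',R$; $\mathsf{raise}\,e::\rho,\mu,\mathsf{raise}\,e\Rightarrow\mu,\mathsf{exn}\,v$ if $\rho,e\Rightarrow v$; $\mathsf{ref}_\ell\,e::\rho,\mu,\mathsf{ref}\,e\Rightarrow\mu[\ell\mapsto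 v],\mathsf{val}\,\ell$ if $\rho,e\Rightarrow v$, $\ell\notin\mathrm{dom}\,\mu$; $e_1:=_\ell e_2::\rho,\mu,e_1:=e_2\Rightarrow\mu[\ell\mapsto v],\mathsf{val}\,()$ if $\rho,e_1\Rightarrow\ell$, $\rho,e_2\Rightarrow v$; $!_\ell e::\rho,\mu,!e\Rightarrow\mu,\mathsf{val}\,\mu(\ell)$ if $\rho,e\Rightarrow\ell\in\mathrm{dom}\,\mu$; $\mathsf{let_S}(T_1,x.T_2)::\rho,\mu,\mathsf{let}\,x=M_1\,\mathsf{in}\,M_2\Rightarrow\mu'',R$ if $T_1::\rho,\mu,M_1\Rightarrow\mu',\mathsf{val}\,v$ and $T_2::\rho[x\mapsto v],\mu',M_2\Rightarrow\mu'',R$; $\mathsf{let_F}(T)::\ldots\Rightarrow\mu',\mathsf{exn}\,v$ if $T::\rho,\mu,M_1\Rightarrow\mu',\mathsf{exn}\,v$; $\mathsf{try_F}(T_1,x.T_2)::\rho,\mu,\mathsf{try}\,M_1\,\mathsf{with}\,x\to M_2\Rightarrow\mu'',R$ if $T_1::\rho,\mu,M_1\Rightarrow\mu',\mathsf{exn}\,v$, $T_2::\rho[x\mapsto v],\mu',M_2\Rightarrow\mu'',R$; $\mathsf{try_S}(T_1)::\ldots\Rightarrow\mu',\mathsf{val}\,v$ if $T_1::\rho,\mu,M_1\Rightarrow\mu',\mathsf{val}\,v$; $\mathsf{caseL}(e,x.T,y)::\rho,\mu,\mathsf{case}\,e\,\mathsf{of}\{\mathsf{inl}\,x\to M_1;\mathsf{inr}\,y\to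 M_2\}\Rightarrow\mu',R$ if $\rho,e\Rightarrow\mathsf{inl}\,v$, $T::\rho[x\mapsto v],\mu,M_1\Rightarrow\mu',R$; symmetrically $\mathsf{caseR}(e,x,y.T)$. Expression forward slicing $\rho,e\nearrow v$: $\rho,\Box\nearrow\Box$; $\rho,x\nearrow\rho(x)$; $()\nearrow()$; $\mathsf{fun}\,f(x).M\nearrow\langle\rho,\mathsf{fun}\,f(x).M\rangle$; $\mathsf{inl},\mathsf{inr}$, pairs componentwise; $\mathsf{fst}\,e\nearrow v_1$, $\mathsf{snd}\,e\nearrow v_2$ if $e\nearrow(v_1,v_2)$; both $\nearrow\Box$ if $e\nearrow\Box$. Computation forward slicing $\rho,\mu,M,T\nearrow\mu',R$: (F-Trace$\Box$) $\rho,\mu,M,\Box^k_{\mathcal{L}}\nearrow\mu\triangleleft\mathcal{L},k\,\Box$. (F-Comp$\Box$) $\rho,\mu,\Box,T\nearrow\mu\triangleleft\mathsf{writes}(T),\mathsf{outcome}(T)\,\Box$. (F-Ret) $\rho,e\nearrow v$ ⟹ $\rho,\mu,\mathsf{return}\,e,\mathsf{return}\,e'\nearrow\mu,\mathsf{val}\,v$. (F-Let) $\rho,\mu,M_1,T_1\nearrow\mu',\mathsf{val}\,v$, $\rho[x\mapsto v],\mu',M_2,T_2\nearrow\mu'',R$ ⟹ $\rho,\mu,\mathsf{let}\,x=M_1\,\mathsf{in}\,M_2,\mathsf{let_S}(T_1,x.T_2)\nearrow\mu'',R$. (F-LetFail) $\rho,\mu,M_1,T_1\nearrow\mu',\mathsf{exn}\,v$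 ⟹ $\rho,\mu,\mathsf{let}\,x=M_1\,\mathsf{in}\,M_2,\mathsf{let_F}(T_1)\nearrow\mu',\mathsf{exn}\,v$. (F-CaseL) $\rho,e\nearrow\mathsf{inl}\,v$, $\rho[x\mapsto v],\mu,M_1,T\nearrow\mu',R$ ⟹ $\rho,\mu,\mathsf{case}\,e\,\mathsf{of}\{\mathsf{inl}\,x\to M_1;\mathsf{inr}\,y\to M_2\},\mathsf{caseL}(e',x.T,y)\nearrow\mu',R$; (F-CaseR) symmetric. (F-CaseL$\Box$/F-CaseR$\Box$) $\rho,e\nearrow\Box$ ⟹ case computation with trace $\mathsf{caseL}(e',x.T,y)$ (resp. $\mathsf{caseR}(e',x,y.T)$) $\nearrow\mu\triangleleft\mathsf{writes}(T),\mathsf{outcome}(T)\,\Box$. (F-App) $\rho,e_1\nearrow v_1=\langle\rho',\mathsf{fun}\,f(x).M\rangle$, $\rho,e_2\nearrow v_2$, $\rho'[f\mapsto v_1][x\mapsto v_2],\mu,M,T\nearrow\mu',R$ ⟹ $\rho,\mu,e_1\,e_2,\mathsf{app}(e_1',e_2',f.x.T)\nearrow\mu',R$. (F-App$\Box$) $\rho,e_1\nearrow\Box$ ⟹ $\rho,\mu,e_1\,e_2,\mathsf{app}(e_1',e_2',f.x.T)\nearrow\mu\triangleleft\mathsf{writes}(T),\mathsf{outcome}(T)\,\Box$. (F-Raise) $\rho,e\nearrow v$ ⟹ $\rho,\mu,\mathsf{raise}\,e,\mathsf{raise}\,e'\nearrow\mu,\mathsf{exn}\,v$. (F-Try) $\rho,\mu,M_1,T_1\nearrow\mu',\mathsf{val}\,v$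 ⟹ $\rho,\mu,\mathsf{try}\,M_1\,\mathsf{with}\,x\to M_2,\mathsf{try_S}(T_1)\nearrow\mu',\mathsf{val}\,v$. (F-TryFail) $\rho,\mu,M_1,T_1\nearrow\mu',\mathsf{exn}\,v$, $\rho[x\mapsto v],\mu',M_2,T_2\nearrow\mu'',R$ ⟹ $\rho,\mu,\mathsf{try}\,M_1\,\mathsf{with}\,x\to M_2,\mathsf{try_F}(T_1,x.T_2)\nearrow\mu'',R$. (F-Ref) $\rho,e\nearrow v$ ⟹ $\rho,\mu,\mathsf{ref}\,e,\mathsf{ref}_\ell\,e'\nearrow\mu[\ell\mapsto v],\mathsf{val}\,\ell$. (F-Assign) $\rho,e_1\nearrow\ell$, $\rho,e_2\nearrow v$ ⟹ $\rho,\mu,e_1:=e_2,e_1':=_\ell e_2'\nearrow\mu[\ell\mapsto v],\mathsf{val}\,()$. (F-Assign$\Box$) $\rho,e_1\nearrow\Box$ ⟹ $\ldots\nearrow\mu[\ell\mapsto\Box],\mathsf{val}\,\Box$. (F-Deref) $\rho,e\nearrow\ell$ ⟹ $\rho,\mu,!e,!_\ell e'\nearrow\mu,\mathsf{val}\,\mu(\ell)$. (F-Deref$\Box$) $\rho,e\nearrow\Box$ ⟹ $\rho,\mu,!e,!_\ell e'\nearrow\mu,\mathsf{val}\,\Box$. For $T::\rho,\mu_1,M\Rightarrow\mu_2,R$, every element of $\mathrm{Prefix}(\rho,\mu_1,M,T)$ has exactly one $\nearrow$-image, lying in $\mathrm{Prefix}(\mu_2,R)$. *)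

theory Defs
  imports Main
begin

section \<open>Syntax of (partial) iTML\<close>

type_synonym var = nat
type_synonym loc = nat

datatype exp =
    Var var | EUnit | Inl exp | Inr exp | EPair exp exp | Fst exp | Snd exp
  | Fun var var comp   (* fun f(x).M *)
  | EHole
and comp =
    Return exp | Let var comp comp   (* let x = M1 in M2 *)
  | App exp exp
  | Case exp var comp var comp       (* case e of {inl x -> M1; inr y -> M2} *)
  | Raise exp | Try comp var comp    (* try M1 with x -> M2 *)
  | Ref exp | Assign exp exp | Deref exp
  | CHole

datatype val =
    VUnit | VInl val | VInr val | VPair val val
  | VClo "var \<Rightarrow> val" var var comp   (* <rho, fun f(x).M> *)
  | VLoc loc
  | VHole

type_synonym env = "var \<Rightarrow> val"
type_synonym store = "loc \<Rightarrow> val"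

datatype outcome = OVal | OExn
datatype res = Res outcome val

datatype trace =
    TReturn exp
  | TLetF trace
  | TLetS trace var trace              (* let_S(T1, x.T2) *)
  | TApp exp exp var var trace         (* app(e1, e2, f.x.T) *)
  | TCaseL exp var trace var           (* caseL(e, x.T, y) *)
  | TCaseR exp var var trace           (* caseR(e, x, y.T) *)
  | TRaise exp
  | TTryS trace
  | TTryF trace var trace              (* try_F(T1, x.T2) *)
  | TRef loc exp
  | TAssign exp loc exp
  | TDeref loc exp
  | THole outcome "loc set"

fun writes :: "trace \<Rightarrow> loc set" where
  "writes (THole k L) = L"
| "writes (TReturn e) = {}"
| "writes (TRaise e) = {}"
| "writes (TDeref l e) = {}"
| "writes (TRef l e) = {l}"
| "writes (TAssign e1 l e2) = {l}"
| "writes (TLetS T1 x T2) = writes T1 \<union> writes T2"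
| "writes (TTryF T1 x T2) = writes T1 \<union> writes T2"
| "writes (TLetF T) = writes T"
| "writes (TTryS T) = writes T"
| "writes (TApp e1 e2 f x T) = writes T"
| "writes (TCaseL e x T y) = writes T"
| "writes (TCaseR e x y T) = writes T"

fun trace_outcome :: "trace \<Rightarrow> outcome" where
  "trace_outcome (THole k L) = k"
| "trace_outcome (TReturn e) = OVal"
| "trace_outcome (TTryS T) = OVal"
| "trace_outcome (TRef l e) = OVal"
| "trace_outcome (TAssign e1 l e2) = OVal"
| "trace_outcome (TDeref l e) = OVal"
| "trace_outcome (TLetF T) = OExn"
| "trace_outcome (TRaise e) = OExn"
| "trace_outcome (TLetS T1 x T2) = trace_outcome T2"
| "trace_outcome (TTryF T1 x T2) = trace_outcome T2"
| "trace_outcome (TApp e1 e2 f x T) = trace_outcome T"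
| "trace_outcome (TCaseL e x T y) = trace_outcome T"
| "trace_outcome (TCaseR e x y T) = trace_outcome T"

section \<open>Prefix order\<close>

inductive exp_le :: "exp \<Rightarrow> exp \<Rightarrow> bool"
  and comp_le :: "comp \<Rightarrow> comp \<Rightarrow> bool" where
  "exp_le EHole e"
| "exp_le (Var x) (Var x)"
| "exp_le EUnit EUnit"
| "exp_le e e' \<Longrightarrow> exp_le (Inl e) (Inl e')"
| "exp_le e e' \<Longrightarrow> exp_le (Inr e) (Inr e')"
| "exp_le e1 e1' \<Longrightarrow> exp_le e2 e2' \<Longrightarrow> exp_le (EPair e1 e2) (EPair e1' e2')"
| "exp_le e e' \<Longrightarrow> exp_le (Fst e) (Fst e')"
| "exp_le e e' \<Longrightarrow> exp_le (Snd e) (Snd e')"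
| "comp_le M M' \<Longrightarrow> exp_le (Fun f x M) (Fun f x M')"
| "comp_le CHole M"
| "exp_le e e' \<Longrightarrow> comp_le (Return e) (Return e')"
| "comp_le M1 M1' \<Longrightarrow> comp_le M2 M2' \<Longrightarrow> comp_le (Let x M1 M2) (Let x M1' M2')"
| "exp_le e1 e1' \<Longrightarrow> exp_le e2 e2' \<Longrightarrow> comp_le (App e1 e2) (App e1' e2')"
| "exp_le e e' \<Longrightarrow> comp_le M1 M1' \<Longrightarrow> comp_le M2 M2' \<Longrightarrow>
     comp_le (Case e x M1 y M2) (Case e' x M1' y M2')"
| "exp_le e e' \<Longrightarrow> comp_le (Raise e) (Raise e')"
| "comp_le M1 M1' \<Longrightarrow> comp_le M2 M2' \<Longrightarrow> comp_le (Try M1 x M2) (Try M1' x M2')"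
| "exp_le e e' \<Longrightarrow> comp_le (Ref e) (Ref e')"
| "exp_le e1 e1' \<Longrightarrow> exp_le e2 e2' \<Longrightarrow> comp_le (Assign e1 e2) (Assign e1' e2')"
| "exp_le e e' \<Longrightarrow> comp_le (Deref e) (Deref e')"

inductive val_le :: "val \<Rightarrow> val \<Rightarrow> bool" where
  "val_le VHole v"
| "val_le VUnit VUnit"
| "val_le v v' \<Longrightarrow> val_le (VInl v) (VInl v')"
| "val_le v v' \<Longrightarrow> val_le (VInr v) (VInr v')"
| "val_le v1 v1' \<Longrightarrow> val_le v2 v2' \<Longrightarrow> val_le (VPair v1 v2) (VPair v1' v2')"
| "(\<forall>y. val_le (\<rho> y) (\<rho>' y)) \<Longrightarrow> comp_le M M' \<Longrightarrow> val_le (VClo \<rho> f x M) (VClo \<rho>' f x M')"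
| "val_le (VLoc l) (VLoc l)"

definition env_le :: "env \<Rightarrow> env \<Rightarrow> bool" where
  "env_le \<rho> \<rho>' \<longleftrightarrow> (\<forall>x. val_le (\<rho> x) (\<rho>' x))"

definition store_le :: "store \<Rightarrow> store \<Rightarrow> bool" where
  "store_le \<mu> \<mu>' \<longleftrightarrow> (\<forall>l. val_le (\<mu> l) (\<mu>' l))"

fun res_le :: "res \<Rightarrow> res \<Rightarrow> bool" where
  "res_le (Res k v) (Res k' v') \<longleftrightarrow> k = k' \<and> val_le v v'"

inductive trace_le :: "trace \<Rightarrow> trace \<Rightarrow> bool" where
  "writes T = L \<Longrightarrow> trace_outcome T = k \<Longrightarrow> trace_le (THole k L) T"
| "exp_le e e' \<Longrightarrow> trace_le (TReturn e) (TReturn e')"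
| "trace_le T T' \<Longrightarrow> trace_le (TLetF T) (TLetF T')"
| "trace_le T1 T1' \<Longrightarrow> trace_le T2 T2' \<Longrightarrow> trace_le (TLetS T1 x T2) (TLetS T1' x T2')"
| "exp_le e1 e1' \<Longrightarrow> exp_le e2 e2' \<Longrightarrow> trace_le T T' \<Longrightarrow>
     trace_le (TApp e1 e2 f x T) (TApp e1' e2' f x T')"
| "exp_le e e' \<Longrightarrow> trace_le T T' \<Longrightarrow> trace_le (TCaseL e x T y) (TCaseL e' x T' y)"
| "exp_le e e' \<Longrightarrow> trace_le T T' \<Longrightarrow> trace_le (TCaseR e x y T) (TCaseR e' x y T')"
| "exp_le e e' \<Longrightarrow> trace_le (TRaise e) (TRaise e')"
| "trace_le T T' \<Longrightarrow> trace_le (TTryS T) (TTryS T')"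
| "trace_le T1 T1' \<Longrightarrow> trace_le T2 T2' \<Longrightarrow> trace_le (TTryF T1 x T2) (TTryF T1' x T2')"
| "exp_le e e' \<Longrightarrow> trace_le (TRef l e) (TRef l e')"
| "exp_le e1 e1' \<Longrightarrow> exp_le e2 e2' \<Longrightarrow> trace_le (TAssign e1 l e2) (TAssign e1' l e2')"
| "exp_le e e' \<Longrightarrow> trace_le (TDeref l e) (TDeref l e')"

fun cfg_le :: "env \<times> store \<times> comp \<times> trace \<Rightarrow> env \<times> store \<times> comp \<times> trace \<Rightarrow> bool" where
  "cfg_le (\<rho>, \<mu>, M, T) (\<rho>', \<mu>', M', T') \<longleftrightarrow>
     env_le \<rho> \<rho>' \<and> store_le \<mu> \<mu>' \<and> comp_le M M' \<and> trace_le T T'"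

fun out_le :: "store \<times> res \<Rightarrow> store \<times> res \<Rightarrow> bool" where
  "out_le (\<mu>, R) (\<mu>', R') \<longleftrightarrow> store_le \<mu> \<mu>' \<and> res_le R R'"

definition prefix_meet :: "('a \<Rightarrow> 'a \<Rightarrow> bool) \<Rightarrow> 'a \<Rightarrow> 'a \<Rightarrow> 'a \<Rightarrow> 'a" where
  "prefix_meet le t a b =
     (THE c. le c t \<and> le c a \<and> le c b \<and> (\<forall>d. le d t \<longrightarrow> le d a \<longrightarrow> le d b \<longrightarrow> le d c))"

section \<open>Evaluation (hole-free)\<close>

definition erase :: "store \<Rightarrow> loc set \<Rightarrow> store" where
  "erase \<mu> L = (\<lambda>l. if l \<in> L then VHole else \<mu> l)"

definition sdom :: "store \<Rightarrow> loc set" where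
  "sdom \<mu> = {l. \<mu> l \<noteq> VHole}"

inductive eval_exp :: "env \<Rightarrow> exp \<Rightarrow> val \<Rightarrow> bool" where
  "eval_exp \<rho> (Var x) (\<rho> x)"
| "eval_exp \<rho> EUnit VUnit"
| "eval_exp \<rho> (Fun f x M) (VClo \<rho> f x M)"
| "eval_exp \<rho> e v \<Longrightarrow> eval_exp \<rho> (Inl e) (VInl v)"
| "eval_exp \<rho> e v \<Longrightarrow> eval_exp \<rho> (Inr e) (VInr v)"
| "eval_exp \<rho> e1 v1 \<Longrightarrow> eval_exp \<rho> e2 v2 \<Longrightarrow> eval_exp \<rho> (EPair e1 e2) (VPair v1 v2)"
| "eval_exp \<rho> e (VPair v1 v2) \<Longrightarrow> eval_exp \<rho> (Fst e) v1"
| "eval_exp \<rho> e (VPair v1 v2) \<Longrightarrow> eval_exp \<rho> (Snd e) v2"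

text \<open>eval T rho mu M mu' R  is  T :: rho, mu, M => mu', R.\<close>

inductive eval :: "trace \<Rightarrow> env \<Rightarrow> store \<Rightarrow> comp \<Rightarrow> store \<Rightarrow> res \<Rightarrow> bool" where
  eReturn: "eval_exp \<rho> e v \<Longrightarrow> eval (TReturn e) \<rho> \<mu> (Return e) \<mu> (Res OVal v)"
| eApp: "eval_exp \<rho> e1 v1 \<Longrightarrow> v1 = VClo \<rho>' f x M \<Longrightarrow> eval_exp \<rho> e2 v2 \<Longrightarrow>
     eval T ((\<rho>'(f := v1))(x := v2)) \<mu> M \<mu>' R \<Longrightarrow>
     eval (TApp e1 e2 f x T) \<rho> \<mu> (App e1 e2) \<mu>' R"
| eRaise: "eval_exp \<rho> e v \<Longrightarrow> eval (TRaise e) \<rho> \<mu> (Raise e) \<mu> (Res OExn v)"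
| eRef: "eval_exp \<rho> e v \<Longrightarrow> l \<notin> sdom \<mu> \<Longrightarrow>
     eval (TRef l e) \<rho> \<mu> (Ref e) (\<mu>(l := v)) (Res OVal (VLoc l))"
| eAssign: "eval_exp \<rho> e1 (VLoc l) \<Longrightarrow> eval_exp \<rho> e2 v \<Longrightarrow>
     eval (TAssign e1 l e2) \<rho> \<mu> (Assign e1 e2) (\<mu>(l := v)) (Res OVal VUnit)"
| eDeref: "eval_exp \<rho> e (VLoc l) \<Longrightarrow> l \<in> sdom \<mu> \<Longrightarrow>
     eval (TDeref l e) \<rho> \<mu> (Deref e) \<mu> (Res OVal (\<mu> l))"
| eLetS: "eval T1 \<rho> \<mu> M1 \<mu>' (Res OVal v) \<Longrightarrow> eval T2 (\<rho>(x := v)) \<mu>' M2 \<mu>'' R \<Longrightarrow>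
     eval (TLetS T1 x T2) \<rho> \<mu> (Let x M1 M2) \<mu>'' R"
| eLetF: "eval T \<rho> \<mu> M1 \<mu>' (Res OExn v) \<Longrightarrow>
     eval (TLetF T) \<rho> \<mu> (Let x M1 M2) \<mu>' (Res OExn v)"
| eTryF: "eval T1 \<rho> \<mu> M1 \<mu>' (Res OExn v) \<Longrightarrow> eval T2 (\<rho>(x := v)) \<mu>' M2 \<mu>'' R \<Longrightarrow>
     eval (TTryF T1 x T2) \<rho> \<mu> (Try M1 x M2) \<mu>'' R"
| eTryS: "eval T1 \<rho> \<mu> M1 \<mu>' (Res OVal v) \<Longrightarrow>
     eval (TTryS T1) \<rho> \<mu> (Try M1 x M2) \<mu>' (Res OVal v)"
| eCaseL: "eval_exp \<rho> e (VInl v) \<Longrightarrow> eval T (\<rho>(x := v)) \<mu> M1 \<mu>' R \<Longrightarrow>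
     eval (TCaseL e x T y) \<rho> \<mu> (Case e x M1 y M2) \<mu>' R"
| eCaseR: "eval_exp \<rho> e (VInr v) \<Longrightarrow> eval T (\<rho>(y := v)) \<mu> M2 \<mu>' R \<Longrightarrow>
     eval (TCaseR e x y T) \<rho> \<mu> (Case e x M1 y M2) \<mu>' R"

section \<open>Forward slicing\<close>

inductive fwd_exp :: "env \<Rightarrow> exp \<Rightarrow> val \<Rightarrow> bool" where
  "fwd_exp \<rho> EHole VHole"
| "fwd_exp \<rho> (Var x) (\<rho> x)"
| "fwd_exp \<rho> EUnit VUnit"
| "fwd_exp \<rho> (Fun f x M) (VClo \<rho> f x M)"
| "fwd_exp \<rho> e v \<Longrightarrow> fwd_exp \<rho> (Inl e) (VInl v)"
| "fwd_exp \<rho> e v \<Longrightarrow> fwd_exp \<rho> (Inr e) (VInr v)"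
| "fwd_exp \<rho> e1 v1 \<Longrightarrow> fwd_exp \<rho> e2 v2 \<Longrightarrow> fwd_exp \<rho> (EPair e1 e2) (VPair v1 v2)"
| "fwd_exp \<rho> e (VPair v1 v2) \<Longrightarrow> fwd_exp \<rho> (Fst e) v1"
| "fwd_exp \<rho> e (VPair v1 v2) \<Longrightarrow> fwd_exp \<rho> (Snd e) v2"
| "fwd_exp \<rho> e VHole \<Longrightarrow> fwd_exp \<rho> (Fst e) VHole"
| "fwd_exp \<rho> e VHole \<Longrightarrow> fwd_exp \<rho> (Snd e) VHole"

text \<open>fwd_comp rho mu M T mu' R  is  rho, mu, M, T  forward-slices to  mu', R.\<close>

inductive fwd_comp :: "env \<Rightarrow> store \<Rightarrow> comp \<Rightarrow> trace \<Rightarrow> store \<Rightarrow> res \<Rightarrow> bool" where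
  F_TraceHole: "fwd_comp \<rho> \<mu> M (THole k L) (erase \<mu> L) (Res k VHole)"
| F_CompHole: "fwd_comp \<rho> \<mu> CHole T (erase \<mu> (writes T)) (Res (trace_outcome T) VHole)"
| F_Ret: "fwd_exp \<rho> e v \<Longrightarrow> fwd_comp \<rho> \<mu> (Return e) (TReturn e') \<mu> (Res OVal v)"
| F_Let: "fwd_comp \<rho> \<mu> M1 T1 \<mu>' (Res OVal v) \<Longrightarrow> fwd_comp (\<rho>(x := v)) \<mu>' M2 T2 \<mu>'' R \<Longrightarrow>
     fwd_comp \<rho> \<mu> (Let x M1 M2) (TLetS T1 x T2) \<mu>'' R"
| F_LetFail: "fwd_comp \<rho> \<mu> M1 T1 \<mu>' (Res OExn v) \<Longrightarrow>
     fwd_comp \<rho> \<mu> (Let x M1 M2) (TLetF T1) \<mu>' (Res OExn v)"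
| F_CaseL: "fwd_exp \<rho> e (VInl v) \<Longrightarrow> fwd_comp (\<rho>(x := v)) \<mu> M1 T \<mu>' R \<Longrightarrow>
     fwd_comp \<rho> \<mu> (Case e x M1 y M2) (TCaseL e' x T y) \<mu>' R"
| F_CaseR: "fwd_exp \<rho> e (VInr v) \<Longrightarrow> fwd_comp (\<rho>(y := v)) \<mu> M2 T \<mu>' R \<Longrightarrow>
     fwd_comp \<rho> \<mu> (Case e x M1 y M2) (TCaseR e' x y T) \<mu>' R"
| F_CaseLHole: "fwd_exp \<rho> e VHole \<Longrightarrow>
     fwd_comp \<rho> \<mu> (Case e x M1 y M2) (TCaseL e' x T y) (erase \<mu> (writes T)) (Res (trace_outcome T) VHole)"
| F_CaseRHole: "fwd_exp \<rho> e VHole \<Longrightarrow>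
     fwd_comp \<rho> \<mu> (Case e x M1 y M2) (TCaseR e' x y T) (erase \<mu> (writes T)) (Res (trace_outcome T) VHole)"
| F_App: "fwd_exp \<rho> e1 v1 \<Longrightarrow> v1 = VClo \<rho>' f x M \<Longrightarrow> fwd_exp \<rho> e2 v2 \<Longrightarrow>
     fwd_comp ((\<rho>'(f := v1))(x := v2)) \<mu> M T \<mu>' R \<Longrightarrow>
     fwd_comp \<rho> \<mu> (App e1 e2) (TApp e1' e2' f x T) \<mu>' R"
| F_AppHole: "fwd_exp \<rho> e1 VHole \<Longrightarrow>
     fwd_comp \<rho> \<mu> (App e1 e2) (TApp e1' e2' f x T) (erase \<mu> (writes T)) (Res (trace_outcome T) VHole)"
| F_Raise: "fwd_exp \<rho> e v \<Longrightarrow> fwd_comp \<rho> \<mu> (Raise e) (TRaise e') \<mu> (Res OExn v)"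
| F_Try: "fwd_comp \<rho> \<mu> M1 T1 \<mu>' (Res OVal v) \<Longrightarrow>
     fwd_comp \<rho> \<mu> (Try M1 x M2) (TTryS T1) \<mu>' (Res OVal v)"
| F_TryFail: "fwd_comp \<rho> \<mu> M1 T1 \<mu>' (Res OExn v) \<Longrightarrow> fwd_comp (\<rho>(x := v)) \<mu>' M2 T2 \<mu>'' R \<Longrightarrow>
     fwd_comp \<rho> \<mu> (Try M1 x M2) (TTryF T1 x T2) \<mu>'' R"
| F_Ref: "fwd_exp \<rho> e v \<Longrightarrow> fwd_comp \<rho> \<mu> (Ref e) (TRef l e') (\<mu>(l := v)) (Res OVal (VLoc l))"
| F_Assign: "fwd_exp \<rho> e1 (VLoc l) \<Longrightarrow> fwd_exp \<rho> e2 v \<Longrightarrow>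
     fwd_comp \<rho> \<mu> (Assign e1 e2) (TAssign e1' l e2') (\<mu>(l := v)) (Res OVal VUnit)"
| F_AssignHole: "fwd_exp \<rho> e1 VHole \<Longrightarrow>
     fwd_comp \<rho> \<mu> (Assign e1 e2) (TAssign e1' l e2') (\<mu>(l := VHole)) (Res OVal VHole)"
| F_Deref: "fwd_exp \<rho> e (VLoc l) \<Longrightarrow> fwd_comp \<rho> \<mu> (Deref e) (TDeref l e') \<mu> (Res OVal (\<mu> l))"
| F_DerefHole: "fwd_exp \<rho> e VHole \<Longrightarrow> fwd_comp \<rho> \<mu> (Deref e) (TDeref l e') \<mu> (Res OVal VHole)"

fun fwd :: "env \<times> store \<times> comp \<times> trace \<Rightarrow> store \<times> res" where
  "fwd (\<rho>, \<mu>, M, T) = (THE (\<mu>', R). fwd_comp \<rho> \<mu> M T \<mu>' R)"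

end

theory Submission
  imports Defs
begin


primrec em :: "exp \<Rightarrow> exp \<Rightarrow> exp" and cm :: "comp \<Rightarrow> comp \<Rightarrow> comp" where
  "em (Var x) b = (case b of Var y \<Rightarrow> if x = y then Var x else EHole | _ \<Rightarrow> EHole)"
| "em EUnit b = (case b of EUnit \<Rightarrow> EUnit | _ \<Rightarrow> EHole)"
| "em (Inl a) b = (case b of Inl c \<Rightarrow> Inl (em a c) | _ \<Rightarrow> EHole)"
| "em (Inr a) b = (case b of Inr c \<Rightarrow> Inr (em a c) | _ \<Rightarrow> EHole)"
| "em (EPair a1 a2) b = (case b of EPair c1 c2 \<Rightarrow> EPair (em a1 c1) (em a2 c2) | _ \<Rightarrow> EHole)"
| "em (Fst a) b = (case b of Fst c \<Rightarrow> Fst (em a c) | _ \<Rightarrow> EHole)"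
| "em (Snd a) b = (case b of Snd c \<Rightarrow> Snd (em a c) | _ \<Rightarrow> EHole)"
| "em (Fun f x M) b = (case b of Fun g y N \<Rightarrow> if f = g \<and> x = y then Fun f x (cm M N) else EHole | _ \<Rightarrow> EHole)"
| "em EHole b = EHole"
| "cm (Return a) b = (case b of Return c \<Rightarrow> Return (em a c) | _ \<Rightarrow> CHole)"
| "cm (Let x M1 M2) b = (case b of Let y N1 N2 \<Rightarrow> if x = y then Let x (cm M1 N1) (cm M2 N2) else CHole | _ \<Rightarrow> CHole)"
| "cm (App a1 a2) b = (case b of App c1 c2 \<Rightarrow> App (em a1 c1) (em a2 c2) | _ \<Rightarrow> CHole)"
| "cm (Case a x M1 y M2) b = (case b of Case c x' N1 y' N2 \<Rightarrow>
      if x = x' \<and> y = y' then Case (em a c) x (cm M1 N1) y (cm M2 N2) else CHole | _ \<Rightarrow> CHole)"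
| "cm (Raise a) b = (case b of Raise c \<Rightarrow> Raise (em a c) | _ \<Rightarrow> CHole)"
| "cm (Try M1 x M2) b = (case b of Try N1 y N2 \<Rightarrow> if x = y then Try (cm M1 N1) x (cm M2 N2) else CHole | _ \<Rightarrow> CHole)"
| "cm (Ref a) b = (case b of Ref c \<Rightarrow> Ref (em a c) | _ \<Rightarrow> CHole)"
| "cm (Assign a1 a2) b = (case b of Assign c1 c2 \<Rightarrow> Assign (em a1 c1) (em a2 c2) | _ \<Rightarrow> CHole)"
| "cm (Deref a) b = (case b of Deref c \<Rightarrow> Deref (em a c) | _ \<Rightarrow> CHole)"
| "cm CHole b = CHole"

primrec vm :: "val \<Rightarrow> val \<Rightarrow> val" where
  "vm VUnit w = (case w of VUnit \<Rightarrow> VUnit | _ \<Rightarrow> VHole)"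
| "vm (VInl a) w = (case w of VInl b \<Rightarrow> VInl (vm a b) | _ \<Rightarrow> VHole)"
| "vm (VInr a) w = (case w of VInr b \<Rightarrow> VInr (vm a b) | _ \<Rightarrow> VHole)"
| "vm (VPair a1 a2) w = (case w of VPair b1 b2 \<Rightarrow> VPair (vm a1 b1) (vm a2 b2) | _ \<Rightarrow> VHole)"
| "vm (VClo r f x M) w = (case w of VClo r' g y N \<Rightarrow>
     if f = g \<and> x = y then VClo (\<lambda>z. vm (r z) (r' z)) f x (cm M N) else VHole | _ \<Rightarrow> VHole)"
| "vm (VLoc l) w = (case w of VLoc l' \<Rightarrow> if l = l' then VLoc l else VHole | _ \<Rightarrow> VHole)"
| "vm VHole w = VHole"


lemmas elc_intros[intro] = exp_le_comp_le.intros

lemma elc_refl: "exp_le e e" "comp_le M M"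
  by (induct e and M) auto

inductive_cases exp_leE:
  "exp_le (Var x) b" "exp_le EUnit b" "exp_le (Inl a) b" "exp_le (Inr a) b" "exp_le (EPair a1 a2) b"
  "exp_le (Fst a) b" "exp_le (Snd a) b" "exp_le (Fun f x M) b"
  "exp_le a EHole"
inductive_cases comp_leE:
  "comp_le (Return a) b" "comp_le (Let x M1 M2) b" "comp_le (App a1 a2) b"
  "comp_le (Case a x M1 y M2) b" "comp_le (Raise a) b" "comp_le (Try M1 x M2) b"
  "comp_le (Ref a) b" "comp_le (Assign a1 a2) b" "comp_le (Deref a) b" "comp_le M CHole"

lemma em_le1: "exp_le (em a b) a" "comp_le (cm M N) M"
  by (induct a and M arbitrary: b and N) (auto split: exp.splits comp.splits)

lemma em_le2: "exp_le (em a b) b" "comp_le (cm M N) N"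
  by (induct a and M arbitrary: b and N) (auto split: exp.splits comp.splits)

lemma em_glb: "exp_le d a \<Longrightarrow> exp_le d b \<Longrightarrow> exp_le d (em a b)"
   "comp_le D M \<Longrightarrow> comp_le D N \<Longrightarrow> comp_le D (cm M N)"
  by (induct arbitrary: b and N rule: exp_le_comp_le.inducts) (auto elim!: exp_leE comp_leE intro!: elc_intros)

lemma elc_antisym: "exp_le a b \<Longrightarrow> exp_le b a \<Longrightarrow> a = b" "comp_le M N \<Longrightarrow> comp_le N M \<Longrightarrow> M = N"
  by (induct rule: exp_le_comp_le.inducts) (auto elim!: exp_leE comp_leE)

lemma elc_trans: "exp_le a b \<Longrightarrow> exp_le b c \<Longrightarrow> exp_le a c" "comp_le M N \<Longrightarrow> comp_le N P \<Longrightarrow> comp_le M P"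
  by (induct arbitrary: c and P rule: exp_le_comp_le.inducts) (auto elim!: exp_leE comp_leE)


lemmas vl_intros[intro] = val_le.intros

inductive_cases val_leE:
  "val_le VUnit b" "val_le (VInl a) b" "val_le (VInr a) b" "val_le (VPair a1 a2) b"
  "val_le (VClo r f x M) b" "val_le (VLoc l) b" "val_le a VHole"

lemma val_refl: "val_le v v"
  by (induct v) (auto intro!: val_le.intros simp: elc_refl)

lemma vm_le1: "val_le (vm a b) a"
  by (induct a arbitrary: b) (auto split: val.splits intro!: val_le.intros simp: em_le1)

lemma vm_le2: "val_le (vm a b) b"
  by (induct a arbitrary: b) (auto split: val.splits intro!: val_le.intros simp: em_le2)

lemma vm_glb: "val_le d a \<Longrightarrow> val_le d b \<Longrightarrow> val_le d (vm a b)"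
  by (induct arbitrary: b rule: val_le.induct) (auto elim!: val_leE intro!: val_le.intros simp: em_glb)

lemma val_antisym: "val_le a b \<Longrightarrow> val_le b a \<Longrightarrow> a = b"
  by (induct rule: val_le.induct) (auto elim!: val_leE simp: elc_antisym)

lemma val_trans: "val_le a b \<Longrightarrow> val_le b c \<Longrightarrow> val_le a c"
  by (induct arbitrary: c rule: val_le.induct) (auto elim!: val_leE intro!: val_le.intros intro: elc_trans)


definition th :: "trace \<Rightarrow> trace" where "th a = THole (trace_outcome a) (writes a)"

primrec tm :: "trace \<Rightarrow> trace \<Rightarrow> trace" where
  "tm (THole k L) b = THole k L"
| "tm (TReturn e) b = (case b of TReturn e' \<Rightarrow> TReturn (em e e') | _ \<Rightarrow> th (TReturn e))"
| "tm (TRaise e) b = (case b of TRaise e' \<Rightarrow> TRaise (em e e') | _ \<Rightarrow> th (TRaise e))"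
| "tm (TLetF T) b = (case b of TLetF T' \<Rightarrow> TLetF (tm T T') | _ \<Rightarrow> th (TLetF T))"
| "tm (TTryS T) b = (case b of TTryS T' \<Rightarrow> TTryS (tm T T') | _ \<Rightarrow> th (TTryS T))"
| "tm (TLetS T1 x T2) b = (case b of TLetS T1' y T2' \<Rightarrow>
     if x = y then TLetS (tm T1 T1') x (tm T2 T2') else th (TLetS T1 x T2) | _ \<Rightarrow> th (TLetS T1 x T2))"
| "tm (TTryF T1 x T2) b = (case b of TTryF T1' y T2' \<Rightarrow>
     if x = y then TTryF (tm T1 T1') x (tm T2 T2') else th (TTryF T1 x T2) | _ \<Rightarrow> th (TTryF T1 x T2))"
| "tm (TApp e1 e2 f x T) b = (case b of TApp e1' e2' g y T' \<Rightarrow>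
     if f = g \<and> x = y then TApp (em e1 e1') (em e2 e2') f x (tm T T') else th (TApp e1 e2 f x T)
     | _ \<Rightarrow> th (TApp e1 e2 f x T))"
| "tm (TCaseL e x T y) b = (case b of TCaseL e' x' T' y' \<Rightarrow>
     if x = x' \<and> y = y' then TCaseL (em e e') x (tm T T') y else th (TCaseL e x T y)
     | _ \<Rightarrow> th (TCaseL e x T y))"
| "tm (TCaseR e x y T) b = (case b of TCaseR e' x' y' T' \<Rightarrow>
     if x = x' \<and> y = y' then TCaseR (em e e') x y (tm T T') else th (TCaseR e x y T)
     | _ \<Rightarrow> th (TCaseR e x y T))"
| "tm (TRef l e) b = (case b of TRef l' e' \<Rightarrow> if l = l' then TRef l (em e e') else th (TRef l e)
     | _ \<Rightarrow> th (TRef l e))"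
| "tm (TAssign e1 l e2) b = (case b of TAssign e1' l' e2' \<Rightarrow>
     if l = l' then TAssign (em e1 e1') l (em e2 e2') else th (TAssign e1 l e2)
     | _ \<Rightarrow> th (TAssign e1 l e2))"
| "tm (TDeref l e) b = (case b of TDeref l' e' \<Rightarrow> if l = l' then TDeref l (em e e') else th (TDeref l e)
     | _ \<Rightarrow> th (TDeref l e))"

lemmas tl_intros[intro] = trace_le.intros

inductive_cases trace_leE1:
  "trace_le (THole k L) b" "trace_le (TReturn e) b" "trace_le (TRaise e) b" "trace_le (TLetF T) b"
  "trace_le (TTryS T) b" "trace_le (TLetS T1 x T2) b" "trace_le (TTryF T1 x T2) b"
  "trace_le (TApp e1 e2 f x T) b" "trace_le (TCaseL e x T y) b" "trace_le (TCaseR e x y T) b"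
  "trace_le (TRef l e) b" "trace_le (TAssign e1 l e2) b" "trace_le (TDeref l e) b"

inductive_cases trace_leE2:
  "trace_le b (THole k L)" "trace_le b (TReturn e)" "trace_le b (TRaise e)" "trace_le b (TLetF T)"
  "trace_le b (TTryS T)" "trace_le b (TLetS T1 x T2)" "trace_le b (TTryF T1 x T2)"
  "trace_le b (TApp e1 e2 f x T)" "trace_le b (TCaseL e x T y)" "trace_le b (TCaseR e x y T)"
  "trace_le b (TRef l e)" "trace_le b (TAssign e1 l e2)" "trace_le b (TDeref l e)"

lemma tle_wo: "trace_le a b \<Longrightarrow> writes a = writes b \<and> trace_outcome a = trace_outcome b"
  by (induct rule: trace_le.induct) auto

lemma tle_w: "trace_le a b \<Longrightarrow> writes a = writes b" using tle_wo by blast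
lemma tle_o: "trace_le a b \<Longrightarrow> trace_outcome a = trace_outcome b" using tle_wo by blast

lemma hole_le_iff[simp]: "trace_le (THole k L) T \<longleftrightarrow> writes T = L \<and> trace_outcome T = k"
  by (auto elim: trace_leE1 intro: trace_le.intros)

lemmas tl_intros2 = trace_le.intros(2-)

lemma trace_refl: "trace_le T T"
  by (induct T) (auto simp: elc_refl)

lemma th_le: "trace_le (th a) a"
  by (simp add: th_def trace_le.intros)

lemma tm_le1: "trace_le (tm a b) a"
  by (induct a arbitrary: b) (auto split: trace.splits simp: th_le em_le1 trace_refl)

lemma tm_le2: "trace_le a t \<Longrightarrow> trace_le b t \<Longrightarrow> trace_le (tm a b) b"
proof (induct arbitrary: b rule: trace_le.induct)
  case (1 T L k)
  then show ?case using tle_wo[of b T] by auto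
next
qed (auto elim!: trace_leE2 intro!: tl_intros2 simp: th_def em_le2 tle_w tle_o)


lemma tm_w: "writes (tm a b) = writes a" "trace_outcome (tm a b) = trace_outcome a"
  using tle_wo[OF tm_le1[of a b]] by auto

lemma tm_glb: "trace_le a t \<Longrightarrow> trace_le b t \<Longrightarrow> trace_le d a \<Longrightarrow> trace_le d b \<Longrightarrow> trace_le d (tm a b)"
proof (induct arbitrary: b d rule: trace_le.induct)
qed (auto elim!: trace_leE2 intro!: tl_intros2 simp: th_def em_glb tle_w tle_o tm_w)

lemma trace_antisym: "trace_le a b \<Longrightarrow> trace_le b a \<Longrightarrow> a = b"
  by (induct rule: trace_le.induct) (auto elim!: trace_leE2 simp: elc_antisym)

lemma trace_trans: "trace_le a b \<Longrightarrow> trace_le b c \<Longrightarrow> trace_le a c"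
  by (induct arbitrary: c rule: trace_le.induct) (auto elim!: trace_leE1 intro!: tl_intros2 intro: elc_trans simp: tle_w tle_o)


lemma prefix_meet_eq:
  assumes antis: "\<And>x y. le x y \<Longrightarrow> le y x \<Longrightarrow> x = y"
    and "le m t" "le m a" "le m b" "\<And>d. le d t \<Longrightarrow> le d a \<Longrightarrow> le d b \<Longrightarrow> le d m"
  shows "prefix_meet le t a b = m"
  unfolding prefix_meet_def
  by (rule the_equality) (use assms in blast)+

definition pm :: "(nat \<Rightarrow> val) \<Rightarrow> (nat \<Rightarrow> val) \<Rightarrow> nat \<Rightarrow> val" where
  "pm f g = (\<lambda>z. vm (f z) (g z))"

fun rm :: "res \<Rightarrow> res \<Rightarrow> res" where "rm (Res k v) (Res k' v') = Res k (vm v v')"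

fun cmeet :: "env \<times> store \<times> comp \<times> trace \<Rightarrow> env \<times> store \<times> comp \<times> trace \<Rightarrow> env \<times> store \<times> comp \<times> trace" where
  "cmeet (\<rho>, \<mu>, M, T) (\<rho>', \<mu>', M', T') = (pm \<rho> \<rho>', pm \<mu> \<mu>', cm M M', tm T T')"

fun omeet :: "store \<times> res \<Rightarrow> store \<times> res \<Rightarrow> store \<times> res" where
  "omeet (\<mu>, R) (\<mu>', R') = (pm \<mu> \<mu>', rm R R')"

lemma cfg_antisym: "cfg_le x y \<Longrightarrow> cfg_le y x \<Longrightarrow> x = y"
proof -
  assume h: "cfg_le x y" "cfg_le y x"
  obtain a b c d where x: "x = (a, b, c, d)" by (cases x) auto
  obtain a' b' c' d' where y: "y = (a', b', c', d')" by (cases y) auto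
  have "a = a'" using h unfolding x y by (auto simp: env_le_def intro!: ext val_antisym)
  moreover have "b = b'" using h unfolding x y by (auto simp: store_le_def intro!: ext val_antisym)
  moreover have "c = c'" using h unfolding x y by (auto intro: elc_antisym)
  moreover have "d = d'" using h unfolding x y by (auto intro: trace_antisym)
  ultimately show ?thesis using x y by simp
qed

lemma res_le_antisym: "res_le x y \<Longrightarrow> res_le y x \<Longrightarrow> x = y"
  by (cases x; cases y) (auto intro: val_antisym)

lemma out_antisym: "out_le x y \<Longrightarrow> out_le y x \<Longrightarrow> x = y"
proof -
  assume h: "out_le x y" "out_le y x"
  obtain a b where x: "x = (a, b)" by (cases x) auto
  obtain a' b' where y: "y = (a', b')" by (cases y) auto
  have "a = a'" using h unfolding x y by (auto simp: store_le_def intro!: ext val_antisym)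
  moreover have "b = b'" using h unfolding x y by (auto intro: res_le_antisym)
  ultimately show ?thesis using x y by simp
qed

lemma meet_cfg:
  assumes "cfg_le a t" "cfg_le b t"
  shows "prefix_meet cfg_le t a b = cmeet a b"
proof -
  obtain r m M T where t: "t = (r, m, M, T)" by (cases t) auto
  obtain r1 m1 M1 T1 where a: "a = (r1, m1, M1, T1)" by (cases a) auto
  obtain r2 m2 M2 T2 where b: "b = (r2, m2, M2, T2)" by (cases b) auto
  show ?thesis
  proof (rule prefix_meet_eq[OF cfg_antisym])
    show "cfg_le (cmeet a b) t" using assms unfolding t a b
      by (auto simp: env_le_def store_le_def pm_def intro: val_trans[OF vm_le1] elc_trans(2)[OF em_le1(2)] trace_trans[OF tm_le1])
    show "cfg_le (cmeet a b) a" unfolding a b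
      by (auto simp: env_le_def store_le_def pm_def vm_le1 em_le1 tm_le1)
    show "cfg_le (cmeet a b) b" using assms unfolding t a b
      by (auto simp: env_le_def store_le_def pm_def vm_le2 em_le2 intro: tm_le2)
    fix d assume "cfg_le d t" "cfg_le d a" "cfg_le d b"
    then show "cfg_le d (cmeet a b)" using assms unfolding t a b
      by (cases d) (auto simp: env_le_def store_le_def pm_def intro: vm_glb em_glb tm_glb)
  qed
qed

lemma meet_out:
  assumes "out_le a t" "out_le b t"
  shows "prefix_meet out_le t a b = omeet a b"
proof -
  obtain m R where t: "t = (m, R)" by (cases t) auto
  obtain m1 R1 where a: "a = (m1, R1)" by (cases a) auto
  obtain m2 R2 where b: "b = (m2, R2)" by (cases b) auto
  obtain k v where R: "R = Res k v" by (cases R)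
  obtain k1 v1 where R1: "R1 = Res k1 v1" by (cases R1)
  obtain k2 v2 where R2: "R2 = Res k2 v2" by (cases R2)
  show ?thesis
  proof (rule prefix_meet_eq[OF out_antisym])
    show "out_le (omeet a b) t" using assms unfolding t a b R R1 R2
      by (auto simp: store_le_def pm_def intro: val_trans[OF vm_le1])
    show "out_le (omeet a b) a" unfolding a b R1 R2
      by (auto simp: store_le_def pm_def vm_le1)
    show "out_le (omeet a b) b" using assms unfolding t a b R R1 R2
      by (auto simp: store_le_def pm_def vm_le2)
    fix d assume "out_le d t" "out_le d a" "out_le d b"
    then show "out_le d (omeet a b)" using assms unfolding t a b R R1 R2
      by (cases d) (auto simp: store_le_def pm_def intro: vm_glb elim!: res_le.elims)
  qed
qed




primrec fe :: "env \<Rightarrow> exp \<Rightarrow> val" where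
  "fe \<rho> (Var x) = \<rho> x"
| "fe \<rho> EUnit = VUnit"
| "fe \<rho> (Inl e) = VInl (fe \<rho> e)"
| "fe \<rho> (Inr e) = VInr (fe \<rho> e)"
| "fe \<rho> (EPair e1 e2) = VPair (fe \<rho> e1) (fe \<rho> e2)"
| "fe \<rho> (Fst e) = (case fe \<rho> e of VPair a b \<Rightarrow> a | _ \<Rightarrow> VHole)"
| "fe \<rho> (Snd e) = (case fe \<rho> e of VPair a b \<Rightarrow> b | _ \<Rightarrow> VHole)"
| "fe \<rho> (Fun f x M) = VClo \<rho> f x M"
| "fe \<rho> EHole = VHole"

inductive_cases exp_leE2: "exp_le e (Fst e0)" "exp_le e (Snd e0)"
  "exp_le e (Var x)" "exp_le e EUnit" "exp_le e (Inl e0)" "exp_le e (Inr e0)" "exp_le e (EPair e1 e2)"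
  "exp_le e (Fun f x M)"
inductive_cases comp_leE2: "comp_le M (Return e)" "comp_le M (Let x M1 M2)" "comp_le M (App e1 e2)"
  "comp_le M (Case e x M1 y M2)" "comp_le M (Raise e)" "comp_le M (Try M1 x M2)" "comp_le M (Ref e)"
  "comp_le M (Assign e1 e2)" "comp_le M (Deref e)"

lemma fe_det0: "fwd_exp \<rho> e v \<Longrightarrow> fe \<rho> e = v"
  by (induct rule: fwd_exp.induct) auto

lemma fe_det: "fwd_exp \<rho> e v \<Longrightarrow> v = fe \<rho> e"
  using fe_det0 by metis

lemma fe_ex: "eval_exp r0 e0 v0 \<Longrightarrow> exp_le e e0 \<Longrightarrow> env_le r r0 \<Longrightarrow>
   fwd_exp r e (fe r e) \<and> val_le (fe r e) v0"
proof (induct arbitrary: e rule: eval_exp.induct)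
  case (7 r0 e0 v1 v2)
  show ?case
  proof (cases "e = EHole")
    case False
    then obtain e1 where e: "e = Fst e1" "exp_le e1 e0" using 7(3) by (auto elim: exp_leE2)
    have h: "fwd_exp r e1 (fe r e1)" "val_le (fe r e1) (VPair v1 v2)" using 7 e by auto
    from h(2) show ?thesis using h e by (cases rule: val_le.cases) (auto intro: fwd_exp.intros)
  qed (auto intro: fwd_exp.intros)
next
  case (8 r0 e0 v1 v2)
  show ?case
  proof (cases "e = EHole")
    case False
    then obtain e1 where e: "e = Snd e1" "exp_le e1 e0" using 8(3) by (auto elim: exp_leE2)
    have h: "fwd_exp r e1 (fe r e1)" "val_le (fe r e1) (VPair v1 v2)" using 8 e by auto
    from h(2) show ?thesis using h e by (cases rule: val_le.cases) (auto intro: fwd_exp.intros)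
  qed (auto intro: fwd_exp.intros)
qed (fastforce elim!: exp_leE2 intro!: fwd_exp.intros val_le.intros simp: env_le_def elc_refl)+


lemma vm_hole2[simp]: "vm a VHole = VHole"
  by (cases a) auto
lemma em_hole2[simp]: "em a EHole = EHole" "cm M CHole = CHole"
  by (cases a; simp) (cases M; simp)

lemma vle_pair: "val_le a (VPair v1 v2) \<Longrightarrow> a = VHole \<or> (\<exists>b1 b2. a = VPair b1 b2)"
  by (cases rule: val_le.cases) auto

lemma fe_meet: "eval_exp r0 e0 v0 \<Longrightarrow> exp_le e e0 \<Longrightarrow> exp_le e' e0 \<Longrightarrow> env_le r r0 \<Longrightarrow> env_le r' r0 \<Longrightarrow>
   fe (pm r r') (em e e') = vm (fe r e) (fe r' e')"
proof (induct arbitrary: e e' rule: eval_exp.induct)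
  case (7 r0 e0 v1 v2)
  from 7(3) have "e = EHole \<or> (\<exists>e1. e = Fst e1 \<and> exp_le e1 e0)" by (auto elim: exp_leE2)
  moreover from 7(4) have "e' = EHole \<or> (\<exists>e1. e' = Fst e1 \<and> exp_le e1 e0)" by (auto elim: exp_leE2)
  ultimately show ?case
  proof (elim disjE exE conjE)
    fix e1 e1' assume e: "e = Fst e1" "exp_le e1 e0" "e' = Fst e1'" "exp_le e1' e0"
    have ih: "fe (pm r r') (em e1 e1') = vm (fe r e1) (fe r' e1')" using 7 e by auto
    have a: "val_le (fe r e1) (VPair v1 v2)" "val_le (fe r' e1') (VPair v1 v2)"
      using fe_ex[OF 7(1)] 7 e by auto
    show ?thesis using vle_pair[OF a(1)] vle_pair[OF a(2)] ih e by auto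
  qed auto
next
  case (8 r0 e0 v1 v2)
  from 8(3) have "e = EHole \<or> (\<exists>e1. e = Snd e1 \<and> exp_le e1 e0)" by (auto elim: exp_leE2)
  moreover from 8(4) have "e' = EHole \<or> (\<exists>e1. e' = Snd e1 \<and> exp_le e1 e0)" by (auto elim: exp_leE2)
  ultimately show ?case
  proof (elim disjE exE conjE)
    fix e1 e1' assume e: "e = Snd e1" "exp_le e1 e0" "e' = Snd e1'" "exp_le e1' e0"
    have ih: "fe (pm r r') (em e1 e1') = vm (fe r e1) (fe r' e1')" using 8 e by auto
    have a: "val_le (fe r e1) (VPair v1 v2)" "val_le (fe r' e1') (VPair v1 v2)"
      using fe_ex[OF 8(1)] 8 e by auto
    show ?thesis using vle_pair[OF a(1)] vle_pair[OF a(2)] ih e by auto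
  qed auto
qed (auto elim!: exp_leE2 simp: pm_def)


definition hr :: "trace \<Rightarrow> store \<Rightarrow> store \<times> res" where
  "hr T \<mu> = (erase \<mu> (writes T), Res (trace_outcome T) VHole)"

primrec fc :: "trace \<Rightarrow> env \<Rightarrow> store \<Rightarrow> comp \<Rightarrow> store \<times> res" where
  "fc (THole k L) \<rho> \<mu> M = (erase \<mu> L, Res k VHole)"
| "fc (TReturn e') \<rho> \<mu> M = (case M of Return e \<Rightarrow> (\<mu>, Res OVal (fe \<rho> e)) | _ \<Rightarrow> hr (TReturn e') \<mu>)"
| "fc (TRaise e') \<rho> \<mu> M = (case M of Raise e \<Rightarrow> (\<mu>, Res OExn (fe \<rho> e)) | _ \<Rightarrow> hr (TRaise e') \<mu>)"
| "fc (TLetF T) \<rho> \<mu> M = (case M of Let x M1 M2 \<Rightarrow> fc T \<rho> \<mu> M1 | _ \<Rightarrow> hr (TLetF T) \<mu>)"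
| "fc (TTryS T) \<rho> \<mu> M = (case M of Try M1 x M2 \<Rightarrow> fc T \<rho> \<mu> M1 | _ \<Rightarrow> hr (TTryS T) \<mu>)"
| "fc (TLetS T1 x T2) \<rho> \<mu> M = (case M of Let y M1 M2 \<Rightarrow>
      (case fc T1 \<rho> \<mu> M1 of (\<mu>', Res k v) \<Rightarrow> fc T2 (\<rho>(x := v)) \<mu>' M2) | _ \<Rightarrow> hr (TLetS T1 x T2) \<mu>)"
| "fc (TTryF T1 x T2) \<rho> \<mu> M = (case M of Try M1 y M2 \<Rightarrow>
      (case fc T1 \<rho> \<mu> M1 of (\<mu>', Res k v) \<Rightarrow> fc T2 (\<rho>(x := v)) \<mu>' M2) | _ \<Rightarrow> hr (TTryF T1 x T2) \<mu>)"
| "fc (TApp e1' e2' f x T) \<rho> \<mu> M = (case M of App e1 e2 \<Rightarrow>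
      (case fe \<rho> e1 of VClo \<rho>' g y Mb \<Rightarrow> fc T ((\<rho>'(f := fe \<rho> e1))(x := fe \<rho> e2)) \<mu> Mb
       | _ \<Rightarrow> hr (TApp e1' e2' f x T) \<mu>) | _ \<Rightarrow> hr (TApp e1' e2' f x T) \<mu>)"
| "fc (TCaseL e' x T y) \<rho> \<mu> M = (case M of Case e x' M1 y' M2 \<Rightarrow>
      (case fe \<rho> e of VInl v \<Rightarrow> fc T (\<rho>(x := v)) \<mu> M1 | _ \<Rightarrow> hr (TCaseL e' x T y) \<mu>)
      | _ \<Rightarrow> hr (TCaseL e' x T y) \<mu>)"
| "fc (TCaseR e' x y T) \<rho> \<mu> M = (case M of Case e x' M1 y' M2 \<Rightarrow>
      (case fe \<rho> e of VInr v \<Rightarrow> fc T (\<rho>(y := v)) \<mu> M2 | _ \<Rightarrow> hr (TCaseR e' x y T) \<mu>)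
      | _ \<Rightarrow> hr (TCaseR e' x y T) \<mu>)"
| "fc (TRef l e') \<rho> \<mu> M = (case M of Ref e \<Rightarrow> (\<mu>(l := fe \<rho> e), Res OVal (VLoc l)) | _ \<Rightarrow> hr (TRef l e') \<mu>)"
| "fc (TAssign e1' l e2') \<rho> \<mu> M = (case M of Assign e1 e2 \<Rightarrow>
      (case fe \<rho> e1 of VHole \<Rightarrow> (\<mu>(l := VHole), Res OVal VHole) | _ \<Rightarrow> (\<mu>(l := fe \<rho> e2), Res OVal VUnit))
      | _ \<Rightarrow> hr (TAssign e1' l e2') \<mu>)"
| "fc (TDeref l e') \<rho> \<mu> M = (case M of Deref e \<Rightarrow>
      (case fe \<rho> e of VHole \<Rightarrow> (\<mu>, Res OVal VHole) | _ \<Rightarrow> (\<mu>, Res OVal (\<mu> l)))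
      | _ \<Rightarrow> hr (TDeref l e') \<mu>)"

lemma fc_eq: "fwd_comp \<rho> \<mu> M T a R \<Longrightarrow> fc T \<rho> \<mu> M = (a, R)"
proof (induct rule: fwd_comp.induct)
  case (F_CompHole \<rho> \<mu> T)
  then show ?case by (cases T) (auto simp: hr_def)
qed (auto simp: hr_def fun_upd_def dest!: fe_det0)

lemma fc_frame: "fwd_comp \<rho> \<mu> M T a R \<Longrightarrow> (\<forall>l. l \<notin> writes T \<longrightarrow> a l = \<mu> l) \<and> (\<exists>v. R = Res (trace_outcome T) v)"
  by (induct rule: fwd_comp.induct) (auto simp: erase_def)

lemma eval_frame: "eval T \<rho> \<mu> M \<mu>' R \<Longrightarrow> (\<forall>l. l \<notin> writes T \<longrightarrow> \<mu>' l = \<mu> l) \<and> (\<exists>v. R = Res (trace_outcome T) v)"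
  by (induct rule: eval.induct) auto


lemma fc_chole: "fc T r m CHole = (erase m (writes T), Res (trace_outcome T) VHole)"
  by (cases T) (auto simp: hr_def)

lemma HR: "eval T0 r0 m0 M0 m2 R2 \<Longrightarrow> store_le m m0 \<Longrightarrow>
  out_le (erase m (writes T0), Res (trace_outcome T0) VHole) (m2, R2)"
  using eval_frame[of T0 r0 m0 M0 m2 R2]
  by (auto simp: store_le_def erase_def)

lemma E_hole: "eval T0 r0 m0 M0 m2 R2 \<Longrightarrow> store_le m m0 \<Longrightarrow> trace_le T T0 \<Longrightarrow>
  M = CHole \<or> (\<exists>k L. T = THole k L) \<Longrightarrow>
  fwd_comp r m M T (fst (fc T r m M)) (snd (fc T r m M)) \<and> out_le (fc T r m M) (m2, R2)"
proof -
  assume a: "eval T0 r0 m0 M0 m2 R2" "store_le m m0" "trace_le T T0" "M = CHole \<or> (\<exists>k L. T = THole k L)"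
  have w: "writes T = writes T0" "trace_outcome T = trace_outcome T0" using tle_wo[OF a(3)] by auto
  have "fwd_comp r m M T (erase m (writes T)) (Res (trace_outcome T) VHole) \<and>
     fc T r m M = (erase m (writes T), Res (trace_outcome T) VHole)"
    using a(4)
  proof
    assume "M = CHole" then show ?thesis using F_CompHole[of r m T] fc_chole by simp
  next
    assume "\<exists>k L. T = THole k L"
    then obtain k L where "T = THole k L" by blast
    then show ?thesis using F_TraceHole[of r m M k L] by simp
  qed
  then show ?thesis using HR[OF a(1,2)] w by simp
qed

lemma env_upd_le: "env_le r r0 \<Longrightarrow> val_le v v0 \<Longrightarrow> env_le (r(x := v)) (r0(x := v0))"
  by (auto simp: env_le_def)

lemma vle_clo: "val_le a (VClo \<rho> f x M) \<Longrightarrow> a = VHole \<or> (\<exists>r' M'. a = VClo r' f x M' \<and> env_le r' \<rho> \<and> comp_le M' M)"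
  by (cases rule: val_le.cases) (auto simp: env_le_def)
lemma vle_inl: "val_le a (VInl v) \<Longrightarrow> a = VHole \<or> (\<exists>v'. a = VInl v' \<and> val_le v' v)"
  by (cases rule: val_le.cases) auto
lemma vle_inr: "val_le a (VInr v) \<Longrightarrow> a = VHole \<or> (\<exists>v'. a = VInr v' \<and> val_le v' v)"
  by (cases rule: val_le.cases) auto
lemma vle_loc: "val_le a (VLoc l) \<Longrightarrow> a = VHole \<or> a = VLoc l"
  by (cases rule: val_le.cases) auto

lemma res_le_ex: "res_le R (Res k v) \<Longrightarrow> \<exists>v'. R = Res k v' \<and> val_le v' v"
  by (cases R) auto

lemma fc_ex: "eval T0 r0 m0 M0 m2 R2 \<Longrightarrow> env_le r r0 \<Longrightarrow> store_le m m0 \<Longrightarrow> comp_le M M0 \<Longrightarrow> trace_le T T0 \<Longrightarrow>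
  fwd_comp r m M T (fst (fc T r m M)) (snd (fc T r m M)) \<and> out_le (fc T r m M) (m2, R2)"
proof (induct arbitrary: r m M T rule: eval.induct)
  case (eReturn \<rho> e v \<mu>)
  show ?case
  proof (cases "M = CHole \<or> (\<exists>k L. T = THole k L)")
    case True then show ?thesis using E_hole[OF eval.eReturn[OF eReturn(1)]] eReturn.prems by blast
  next
    case False
    then obtain e' e'' where eq: "M = Return e'" "T = TReturn e''" "exp_le e' e"
      using eReturn.prems by (auto elim!: comp_leE2 trace_leE2)
    show ?thesis using eq fe_ex[OF eReturn(1) eq(3) eReturn.prems(1)] eReturn.prems
      by (auto intro: fwd_comp.intros)
  qed
next
  case (eRaise \<rho> e v \<mu>)
  show ?case
  proof (cases "M = CHole \<or> (\<exists>k L. T = THole k L)")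
    case True then show ?thesis using E_hole[OF eval.eRaise[OF eRaise(1)]] eRaise.prems by blast
  next
    case False
    then obtain e' e'' where eq: "M = Raise e'" "T = TRaise e''" "exp_le e' e"
      using eRaise.prems by (auto elim!: comp_leE2 trace_leE2)
    show ?thesis using eq fe_ex[OF eRaise(1) eq(3) eRaise.prems(1)] eRaise.prems
      by (auto intro: fwd_comp.intros)
  qed
next
  case (eRef \<rho> e v l \<mu>)
  show ?case
  proof (cases "M = CHole \<or> (\<exists>k L. T = THole k L)")
    case True then show ?thesis using E_hole[OF eval.eRef[OF eRef(1,2)]] eRef.prems by blast
  next
    case False
    then obtain e' e'' where eq: "M = Ref e'" "T = TRef l e''" "exp_le e' e"
      using eRef.prems by (auto elim!: comp_leE2 trace_leE2)
    have h: "fwd_exp r e' (fe r e')" "val_le (fe r e') v"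
      using fe_ex[OF eRef(1) eq(3) eRef.prems(1)] by auto
    show ?thesis using eq h F_Ref[OF h(1), of m l e''] eRef.prems
      by (auto simp: store_le_def fun_upd_def)
  qed
next
  case (eDeref \<rho> e l \<mu>)
  show ?case
  proof (cases "M = CHole \<or> (\<exists>k L. T = THole k L)")
    case True then show ?thesis using E_hole[OF eval.eDeref[OF eDeref(1,2)]] eDeref.prems by blast
  next
    case False
    then obtain e' e'' where eq: "M = Deref e'" "T = TDeref l e''" "exp_le e' e"
      using eDeref.prems by (auto elim!: comp_leE2 trace_leE2)
    have h: "fwd_exp r e' (fe r e')" "val_le (fe r e') (VLoc l)"
      using fe_ex[OF eDeref(1) eq(3) eDeref.prems(1)] by auto
    show ?thesis using eq h vle_loc[OF h(2)] eDeref.prems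
      by (auto intro: fwd_comp.intros simp: store_le_def)
  qed
next
  case (eAssign \<rho> e1 l e2 v \<mu>)
  show ?case
  proof (cases "M = CHole \<or> (\<exists>k L. T = THole k L)")
    case True then show ?thesis using E_hole[OF eval.eAssign[OF eAssign(1,2)]] eAssign.prems by blast
  next
    case False
    then obtain e1' e2' e1'' e2'' where eq: "M = Assign e1' e2'" "T = TAssign e1'' l e2''"
       "exp_le e1' e1" "exp_le e2' e2"
      using eAssign.prems by (auto elim!: comp_leE2 trace_leE2)
    have h: "fwd_exp r e1' (fe r e1')" "val_le (fe r e1') (VLoc l)"
      using fe_ex[OF eAssign(1) eq(3) eAssign.prems(1)] by auto
    have h2: "fwd_exp r e2' (fe r e2')" "val_le (fe r e2') v"
      using fe_ex[OF eAssign(2) eq(4) eAssign.prems(1)] by auto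
    show ?thesis using eq h h2 vle_loc[OF h(2)] eAssign.prems
      F_Assign[of r e1' l e2' "fe r e2'" m e1'' e2''] F_AssignHole[of r e1' m e2' e1'' l e2'']
      by (auto simp: store_le_def fun_upd_def)
  qed
next
  case (eLetS T1 \<rho> \<mu> M1 \<mu>' v T2 x M2 \<mu>'' R)
  show ?case
  proof (cases "M = CHole \<or> (\<exists>k L. T = THole k L)")
    case True then show ?thesis using E_hole[OF eval.eLetS[OF eLetS(1,3)]] eLetS.prems by blast
  next
    case False
    then obtain M1' M2' T1' T2' where eq: "M = Let x M1' M2'" "T = TLetS T1' x T2'"
      "comp_le M1' M1" "comp_le M2' M2" "trace_le T1' T1" "trace_le T2' T2"
      using eLetS.prems by (auto elim!: comp_leE2 trace_leE2)
    obtain m1 R1 where f1: "fc T1' r m M1' = (m1, R1)" by fastforce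
    have ih1: "fwd_comp r m M1' T1' m1 R1" "store_le m1 \<mu>'" "res_le R1 (Res OVal v)"
      using eLetS(2)[of r m M1' T1'] eLetS.prems eq f1 by auto
    then obtain v' where R1: "R1 = Res OVal v'" "val_le v' v" using res_le_ex by blast
    have ih2: "fwd_comp (r(x := v')) m1 M2' T2' (fst (fc T2' (r(x := v')) m1 M2')) (snd (fc T2' (r(x := v')) m1 M2'))"
       "out_le (fc T2' (r(x := v')) m1 M2') (\<mu>'', R)"
      using eLetS(4)[of "r(x := v')" m1 M2' T2'] eLetS.prems eq ih1 R1 env_upd_le[of r _ v' v x] by (auto simp: fun_upd_def)
    show ?thesis using eq f1 ih1 ih2 R1 by (auto intro: fwd_comp.intros)
  qed
next
  case (eTryF T1 \<rho> \<mu> M1 \<mu>' v T2 x M2 \<mu>'' R)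
  show ?case
  proof (cases "M = CHole \<or> (\<exists>k L. T = THole k L)")
    case True then show ?thesis using E_hole[OF eval.eTryF[OF eTryF(1,3)]] eTryF.prems by blast
  next
    case False
    then obtain M1' M2' T1' T2' where eq: "M = Try M1' x M2'" "T = TTryF T1' x T2'"
      "comp_le M1' M1" "comp_le M2' M2" "trace_le T1' T1" "trace_le T2' T2"
      using eTryF.prems by (auto elim!: comp_leE2 trace_leE2)
    obtain m1 R1 where f1: "fc T1' r m M1' = (m1, R1)" by fastforce
    have ih1: "fwd_comp r m M1' T1' m1 R1" "store_le m1 \<mu>'" "res_le R1 (Res OExn v)"
      using eTryF(2)[of r m M1' T1'] eTryF.prems eq f1 by auto
    then obtain v' where R1: "R1 = Res OExn v'" "val_le v' v" using res_le_ex by blast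
    have ih2: "fwd_comp (r(x := v')) m1 M2' T2' (fst (fc T2' (r(x := v')) m1 M2')) (snd (fc T2' (r(x := v')) m1 M2'))"
       "out_le (fc T2' (r(x := v')) m1 M2') (\<mu>'', R)"
      using eTryF(4)[of "r(x := v')" m1 M2' T2'] eTryF.prems eq ih1 R1 env_upd_le[of r _ v' v x] by (auto simp: fun_upd_def)
    show ?thesis using eq f1 ih1 ih2 R1 by (auto intro: fwd_comp.intros)
  qed
next
  case (eLetF T1 \<rho> \<mu> M1 \<mu>' v x M2)
  show ?case
  proof (cases "M = CHole \<or> (\<exists>k L. T = THole k L)")
    case True then show ?thesis using E_hole[OF eval.eLetF[OF eLetF(1)]] eLetF.prems by blast
  next
    case False
    then obtain M1' M2' T1' where eq: "M = Let x M1' M2'" "T = TLetF T1'"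
      "comp_le M1' M1" "trace_le T1' T1"
      using eLetF.prems by (auto elim!: comp_leE2 trace_leE2)
    obtain m1 R1 where f1: "fc T1' r m M1' = (m1, R1)" by fastforce
    have ih1: "fwd_comp r m M1' T1' m1 R1" "store_le m1 \<mu>'" "res_le R1 (Res OExn v)"
      using eLetF(2)[of r m M1' T1'] eLetF.prems eq f1 by auto
    then obtain v' where R1: "R1 = Res OExn v'" "val_le v' v" using res_le_ex by blast
    show ?thesis using eq f1 ih1 R1 by (auto intro: fwd_comp.intros)
  qed
next
  case (eTryS T1 \<rho> \<mu> M1 \<mu>' v x M2)
  show ?case
  proof (cases "M = CHole \<or> (\<exists>k L. T = THole k L)")
    case True then show ?thesis using E_hole[OF eval.eTryS[OF eTryS(1)]] eTryS.prems by blast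
  next
    case False
    then obtain M1' M2' T1' where eq: "M = Try M1' x M2'" "T = TTryS T1'"
      "comp_le M1' M1" "trace_le T1' T1"
      using eTryS.prems by (auto elim!: comp_leE2 trace_leE2)
    obtain m1 R1 where f1: "fc T1' r m M1' = (m1, R1)" by fastforce
    have ih1: "fwd_comp r m M1' T1' m1 R1" "store_le m1 \<mu>'" "res_le R1 (Res OVal v)"
      using eTryS(2)[of r m M1' T1'] eTryS.prems eq f1 by auto
    then obtain v' where R1: "R1 = Res OVal v'" "val_le v' v" using res_le_ex by blast
    show ?thesis using eq f1 ih1 R1 by (auto intro: fwd_comp.intros)
  qed
next
  case (eCaseL \<rho> e v T1 x \<mu> M1 \<mu>' R y M2)
  show ?case
  proof (cases "M = CHole \<or> (\<exists>k L. T = THole k L)")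
    case True then show ?thesis using E_hole[OF eval.eCaseL[OF eCaseL(1,2)]] eCaseL.prems by blast
  next
    case False
    then obtain e' M1' M2' e'' T1' where eq: "M = Case e' x M1' y M2'" "T = TCaseL e'' x T1' y"
      "exp_le e' e" "comp_le M1' M1" "trace_le T1' T1"
      using eCaseL.prems by (auto elim!: comp_leE2 trace_leE2)
    have h: "fwd_exp r e' (fe r e')" "val_le (fe r e') (VInl v)"
      using fe_ex[OF eCaseL(1) eq(3) eCaseL.prems(1)] by auto
    from vle_inl[OF h(2)] show ?thesis
    proof
      assume "fe r e' = VHole"
      then show ?thesis using eq h HR[OF eval.eCaseL[OF eCaseL(1,2)] eCaseL.prems(2)]
        using F_CaseLHole[of r e' m x M1' y M2' e'' T1'] tle_wo[OF eq(5)]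
        by (auto simp: hr_def)
    next
      assume "\<exists>v'. fe r e' = VInl v' \<and> val_le v' v"
      then obtain v' where v': "fe r e' = VInl v'" "val_le v' v" by blast
      have ih: "fwd_comp (r(x := v')) m M1' T1' (fst (fc T1' (r(x := v')) m M1')) (snd (fc T1' (r(x := v')) m M1'))"
        "out_le (fc T1' (r(x := v')) m M1') (\<mu>', R)"
        using eCaseL(3)[of "r(x := v')" m M1' T1'] eCaseL.prems eq v' env_upd_le[of r _ v' v] by (auto simp: fun_upd_def)
      show ?thesis using eq v' h ih by (auto intro: fwd_comp.intros)
    qed
  qed
next
  case (eCaseR \<rho> e v T1 y \<mu> M2 \<mu>' R x M1)
  show ?case
  proof (cases "M = CHole \<or> (\<exists>k L. T = THole k L)")
    case True then show ?thesis using E_hole[OF eval.eCaseR[OF eCaseR(1,2)]] eCaseR.prems by blast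
  next
    case False
    then obtain e' M1' M2' e'' T1' where eq: "M = Case e' x M1' y M2'" "T = TCaseR e'' x y T1'"
      "exp_le e' e" "comp_le M2' M2" "trace_le T1' T1"
      using eCaseR.prems by (auto elim!: comp_leE2 trace_leE2)
    have h: "fwd_exp r e' (fe r e')" "val_le (fe r e') (VInr v)"
      using fe_ex[OF eCaseR(1) eq(3) eCaseR.prems(1)] by auto
    from vle_inr[OF h(2)] show ?thesis
    proof
      assume "fe r e' = VHole"
      then show ?thesis using eq h HR[OF eval.eCaseR[OF eCaseR(1,2)] eCaseR.prems(2)]
        using F_CaseRHole[of r e' m x M1' y M2' e'' T1'] tle_wo[OF eq(5)]
        by (auto simp: hr_def)
    next
      assume "\<exists>v'. fe r e' = VInr v' \<and> val_le v' v"
      then obtain v' where v': "fe r e' = VInr v'" "val_le v' v" by blast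
      have ih: "fwd_comp (r(y := v')) m M2' T1' (fst (fc T1' (r(y := v')) m M2')) (snd (fc T1' (r(y := v')) m M2'))"
        "out_le (fc T1' (r(y := v')) m M2') (\<mu>', R)"
        using eCaseR(3)[of "r(y := v')" m M2' T1'] eCaseR.prems eq v' env_upd_le[of r _ v' v] by (auto simp: fun_upd_def)
      show ?thesis using eq v' h ih by (auto intro: fwd_comp.intros)
    qed
  qed
next
  case (eApp \<rho> e1 v1 \<rho>' f x Mb e2 v2 T1 \<mu> \<mu>' R)
  show ?case
  proof (cases "M = CHole \<or> (\<exists>k L. T = THole k L)")
    case True then show ?thesis using E_hole[OF eval.eApp[OF eApp(1,2,3,4)]] eApp.prems by blast
  next
    case False
    then obtain e1' e2' e1'' e2'' T1' where eq: "M = App e1' e2'" "T = TApp e1'' e2'' f x T1'"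
      "exp_le e1' e1" "exp_le e2' e2" "trace_le T1' T1"
      using eApp.prems by (auto elim!: comp_leE2 trace_leE2)
    have h: "fwd_exp r e1' (fe r e1')" "val_le (fe r e1') (VClo \<rho>' f x Mb)"
      using fe_ex[OF eApp(1) eq(3) eApp.prems(1)] eApp(2) by auto
    have h2: "fwd_exp r e2' (fe r e2')" "val_le (fe r e2') v2"
      using fe_ex[OF eApp(3) eq(4) eApp.prems(1)] by auto
    from vle_clo[OF h(2)] show ?thesis
    proof
      assume "fe r e1' = VHole"
      then show ?thesis using eq h HR[OF eval.eApp[OF eApp(1,2,3,4)] eApp.prems(2)]
        using F_AppHole[of r e1' m e2' e1'' e2'' f x T1'] tle_wo[OF eq(5)]
        by (auto simp: hr_def)
    next
      assume "\<exists>r' M'. fe r e1' = VClo r' f x M' \<and> env_le r' \<rho>' \<and> comp_le M' Mb"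
      then obtain ra Ma where c: "fe r e1' = VClo ra f x Ma" "env_le ra \<rho>'" "comp_le Ma Mb" by blast
      have envle: "env_le ((ra(f := fe r e1'))(x := fe r e2')) ((\<rho>'(f := v1))(x := v2))"
        using c h(2) h2 eApp(2) by (auto intro!: env_upd_le)
      have ih: "fwd_comp ((ra(f := fe r e1'))(x := fe r e2')) m Ma T1' (fst (fc T1' ((ra(f := fe r e1'))(x := fe r e2')) m Ma)) (snd (fc T1' ((ra(f := fe r e1'))(x := fe r e2')) m Ma))"
        "out_le (fc T1' ((ra(f := fe r e1'))(x := fe r e2')) m Ma) (\<mu>', R)"
        using eApp(5)[OF envle eApp.prems(2) c(3) eq(5)] by (auto simp: fun_upd_def)
      show ?thesis using eq c h h2 ih F_App[OF h(1) c(1) h2(1)] by auto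
    qed
  qed
qed


lemma fc_holeish: "trace_le T T0 \<Longrightarrow> M = CHole \<or> (\<exists>k L. T = THole k L) \<Longrightarrow>
  fc T r m M = (erase m (writes T0), Res (trace_outcome T0) VHole)"
  using tle_wo[of T T0] by (auto simp: fc_chole)

lemma fc_gen: "eval T0 r0 m0 M0 m2 R2 \<Longrightarrow> env_le r r0 \<Longrightarrow> store_le m m0 \<Longrightarrow> comp_le M M0 \<Longrightarrow> trace_le T T0 \<Longrightarrow>
  (\<forall>l. l \<notin> writes T0 \<longrightarrow> fst (fc T r m M) l = m l) \<and> (\<exists>v. snd (fc T r m M) = Res (trace_outcome T0) v)"
  using fc_ex[of T0 r0 m0 M0 m2 R2 r m M T] fc_frame[of r m M T "fst (fc T r m M)" "snd (fc T r m M)"]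
    tle_wo[of T T0] by auto

lemma HM:
  assumes ev: "eval T0 r0 m0 M0 m2 R2"
    and p1: "env_le r r0" "store_le m m0" "comp_le M M0" "trace_le T T0"
    and p2: "env_le r' r0" "store_le m' m0" "comp_le M' M0" "trace_le T' T0"
    and h: "fc T r m M = (erase m (writes T0), Res (trace_outcome T0) VHole) \<or>
            fc T' r' m' M' = (erase m' (writes T0), Res (trace_outcome T0) VHole)"
    and hm: "fc (tm T T') (pm r r') (pm m m') (cm M M') = (erase (pm m m') (writes T0), Res (trace_outcome T0) VHole)"
  shows "fc (tm T T') (pm r r') (pm m m') (cm M M') = omeet (fc T r m M) (fc T' r' m' M')"
proof -
  have g1: "\<forall>l. l \<notin> writes T0 \<longrightarrow> fst (fc T r m M) l = m l" "\<exists>v. snd (fc T r m M) = Res (trace_outcome T0) v"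
    using fc_gen[OF ev p1] by auto
  have g2: "\<forall>l. l \<notin> writes T0 \<longrightarrow> fst (fc T' r' m' M') l = m' l" "\<exists>v. snd (fc T' r' m' M') = Res (trace_outcome T0) v"
    using fc_gen[OF ev p2] by auto
  obtain a1 R1 where f1: "fc T r m M = (a1, R1)" by fastforce
  obtain a2 R2' where f2: "fc T' r' m' M' = (a2, R2')" by fastforce
  show ?thesis using h hm g1 g2 unfolding f1 f2
    by (auto simp: pm_def erase_def fun_eq_iff)
qed

lemma tm_hole2: "\<exists>k' L'. tm T (THole k L) = THole k' L'"
  by (cases T) (auto simp: th_def)

lemma HM0:
  assumes ev: "eval T0 r0 m0 M0 m2 R2"
    and p1: "env_le r r0" "store_le m m0" "comp_le M M0" "trace_le T T0"
    and p2: "env_le r' r0" "store_le m' m0" "comp_le M' M0" "trace_le T' T0"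
    and h: "M = CHole \<or> M' = CHole \<or> (\<exists>k L. T = THole k L) \<or> (\<exists>k L. T' = THole k L)"
  shows "fc (tm T T') (pm r r') (pm m m') (cm M M') = omeet (fc T r m M) (fc T' r' m' M')"
proof (rule HM[OF ev p1 p2])
  show "fc T r m M = (erase m (writes T0), Res (trace_outcome T0) VHole) \<or>
            fc T' r' m' M' = (erase m' (writes T0), Res (trace_outcome T0) VHole)"
    using h fc_holeish[OF p1(4), of M r m] fc_holeish[OF p2(4), of M' r' m'] by blast
  have "trace_le (tm T T') T0" using trace_trans[OF tm_le1 p1(4)] .
  moreover have "cm M M' = CHole \<or> (\<exists>k L. tm T T' = THole k L)"
    using h tm_hole2[of T] by auto
  ultimately show "fc (tm T T') (pm r r') (pm m m') (cm M M') = (erase (pm m m') (writes T0), Res (trace_outcome T0) VHole)"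
    using fc_holeish by blast
qed


lemma pm_upd: "pm (r(x := a)) (r'(x := b)) = (pm r r')(x := vm a b)"
  by (auto simp: pm_def)

lemma vm_clo: "vm (VClo ra f x Ma) (VClo rb f x Mb) = VClo (pm ra rb) f x (cm Ma Mb)"
  by (simp add: pm_def)

lemma res_ex: "res_le R (Res k v) \<Longrightarrow> \<exists>v'. R = Res k v' \<and> val_le v' v"
  by (cases R) auto

lemma fc_meet: "eval T0 r0 m0 M0 m2 R2 \<Longrightarrow>
  env_le r r0 \<Longrightarrow> store_le m m0 \<Longrightarrow> comp_le M M0 \<Longrightarrow> trace_le T T0 \<Longrightarrow>
  env_le r' r0 \<Longrightarrow> store_le m' m0 \<Longrightarrow> comp_le M' M0 \<Longrightarrow> trace_le T' T0 \<Longrightarrow>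
  fc (tm T T') (pm r r') (pm m m') (cm M M') = omeet (fc T r m M) (fc T' r' m' M')"
proof (induct arbitrary: r m M T r' m' M' T' rule: eval.induct)
  case (eReturn \<rho> e v \<mu>)
  have ev: "eval (TReturn e) \<rho> \<mu> (Return e) \<mu> (Res OVal v)" using eval.eReturn[OF eReturn(1)] .
  show ?case
  proof (cases "M = CHole \<or> M' = CHole \<or> (\<exists>k L. T = THole k L) \<or> (\<exists>k L. T' = THole k L)")
    case True then show ?thesis using HM0[OF ev eReturn.prems] by blast
  next
    case False
    then obtain ea eb ta tb where eq: "M = Return ea" "T = TReturn ta" "M' = Return eb" "T' = TReturn tb"
      "exp_le ea e" "exp_le eb e"
      using eReturn.prems by (auto elim!: comp_leE2 trace_leE2)
    show ?thesis using eq fe_meet[OF eReturn(1) eq(5,6) eReturn.prems(1,5)] by simp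
  qed
next
  case (eRaise \<rho> e v \<mu>)
  have ev: "eval (TRaise e) \<rho> \<mu> (Raise e) \<mu> (Res OExn v)" using eval.eRaise[OF eRaise(1)] .
  show ?case
  proof (cases "M = CHole \<or> M' = CHole \<or> (\<exists>k L. T = THole k L) \<or> (\<exists>k L. T' = THole k L)")
    case True then show ?thesis using HM0[OF ev eRaise.prems] by blast
  next
    case False
    then obtain ea eb ta tb where eq: "M = Raise ea" "T = TRaise ta" "M' = Raise eb" "T' = TRaise tb"
      "exp_le ea e" "exp_le eb e"
      using eRaise.prems by (auto elim!: comp_leE2 trace_leE2)
    show ?thesis using eq fe_meet[OF eRaise(1) eq(5,6) eRaise.prems(1,5)] by simp
  qed
next
  case (eRef \<rho> e v l \<mu>)
  have ev: "eval (TRef l e) \<rho> \<mu> (Ref e) (\<mu>(l := v)) (Res OVal (VLoc l))" using eval.eRef[OF eRef(1,2)] .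
  show ?case
  proof (cases "M = CHole \<or> M' = CHole \<or> (\<exists>k L. T = THole k L) \<or> (\<exists>k L. T' = THole k L)")
    case True then show ?thesis using HM0[OF ev eRef.prems] by blast
  next
    case False
    then obtain ea eb ta tb where eq: "M = Ref ea" "T = TRef l ta" "M' = Ref eb" "T' = TRef l tb"
      "exp_le ea e" "exp_le eb e"
      using eRef.prems by (auto elim!: comp_leE2 trace_leE2)
    show ?thesis using eq fe_meet[OF eRef(1) eq(5,6) eRef.prems(1,5)] by (simp add: pm_upd)
  qed
next
  case (eDeref \<rho> e l \<mu>)
  have ev: "eval (TDeref l e) \<rho> \<mu> (Deref e) \<mu> (Res OVal (\<mu> l))" using eval.eDeref[OF eDeref(1,2)] .
  show ?case
  proof (cases "M = CHole \<or> M' = CHole \<or> (\<exists>k L. T = THole k L) \<or> (\<exists>k L. T' = THole k L)")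
    case True then show ?thesis using HM0[OF ev eDeref.prems] by blast
  next
    case False
    then obtain ea eb ta tb where eq: "M = Deref ea" "T = TDeref l ta" "M' = Deref eb" "T' = TDeref l tb"
      "exp_le ea e" "exp_le eb e"
      using eDeref.prems by (auto elim!: comp_leE2 trace_leE2)
    have a: "val_le (fe r ea) (VLoc l)" using fe_ex[OF eDeref(1) eq(5) eDeref.prems(1)] by auto
    have b: "val_le (fe r' eb) (VLoc l)" using fe_ex[OF eDeref(1) eq(6) eDeref.prems(5)] by auto
    show ?thesis using eq fe_meet[OF eDeref(1) eq(5,6) eDeref.prems(1,5)] vle_loc[OF a] vle_loc[OF b]
      by (auto simp: pm_def)
  qed
next
  case (eAssign \<rho> e1 l e2 v \<mu>)
  have ev: "eval (TAssign e1 l e2) \<rho> \<mu> (Assign e1 e2) (\<mu>(l := v)) (Res OVal VUnit)"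
    using eval.eAssign[OF eAssign(1,2)] .
  show ?case
  proof (cases "M = CHole \<or> M' = CHole \<or> (\<exists>k L. T = THole k L) \<or> (\<exists>k L. T' = THole k L)")
    case True then show ?thesis using HM0[OF ev eAssign.prems] by blast
  next
    case False
    then obtain ea eb ta tb ea2 eb2 ta2 tb2 where eq: "M = Assign ea ea2" "T = TAssign ta l ta2"
      "M' = Assign eb eb2" "T' = TAssign tb l tb2"
      "exp_le ea e1" "exp_le eb e1" "exp_le ea2 e2" "exp_le eb2 e2"
      using eAssign.prems by (auto elim!: comp_leE2 trace_leE2)
    have a: "val_le (fe r ea) (VLoc l)" using fe_ex[OF eAssign(1) eq(5) eAssign.prems(1)] by auto
    have b: "val_le (fe r' eb) (VLoc l)" using fe_ex[OF eAssign(1) eq(6) eAssign.prems(5)] by auto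
    show ?thesis using eq fe_meet[OF eAssign(1) eq(5,6) eAssign.prems(1,5)]
      fe_meet[OF eAssign(2) eq(7,8) eAssign.prems(1,5)] vle_loc[OF a] vle_loc[OF b]
      by (auto simp: pm_upd)
  qed
next
  case (eLetS T1 \<rho> \<mu> M1 \<mu>' v T2 x M2 \<mu>'' R)
  have ev: "eval (TLetS T1 x T2) \<rho> \<mu> (Let x M1 M2) \<mu>'' R" using eval.eLetS[OF eLetS(1,3)] .
  show ?case
  proof (cases "M = CHole \<or> M' = CHole \<or> (\<exists>k L. T = THole k L) \<or> (\<exists>k L. T' = THole k L)")
    case True then show ?thesis using HM0[OF ev eLetS.prems] by blast
  next
    case False
    then obtain M1a M2a T1a T2a M1b M2b T1b T2b where eq: "M = Let x M1a M2a" "T = TLetS T1a x T2a"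
      "M' = Let x M1b M2b" "T' = TLetS T1b x T2b"
      "comp_le M1a M1" "comp_le M2a M2" "trace_le T1a T1" "trace_le T2a T2"
      "comp_le M1b M1" "comp_le M2b M2" "trace_le T1b T1" "trace_le T2b T2"
      using eLetS.prems by (auto elim!: comp_leE2 trace_leE2)
    obtain m1a R1a where f1a: "fc T1a r m M1a = (m1a, R1a)" by fastforce
    obtain m1b R1b where f1b: "fc T1b r' m' M1b = (m1b, R1b)" by fastforce
    have ea: "store_le m1a \<mu>'" "res_le R1a (Res OVal v)"
      using fc_ex[OF eLetS(1), of r m M1a T1a] eLetS.prems eq f1a by auto
    then obtain va where va: "R1a = Res OVal va" "val_le va v" using res_ex by blast
    have eb: "store_le m1b \<mu>'" "res_le R1b (Res OVal v)"
      using fc_ex[OF eLetS(1), of r' m' M1b T1b] eLetS.prems eq f1b by auto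
    then obtain vb where vb: "R1b = Res OVal vb" "val_le vb v" using res_ex by blast
    have ih1: "fc (tm T1a T1b) (pm r r') (pm m m') (cm M1a M1b) = (pm m1a m1b, Res OVal (vm va vb))"
      using eLetS(2)[of r m M1a T1a r' m' M1b T1b] eLetS.prems eq f1a f1b va vb by auto
    have ih2: "fc (tm T2a T2b) (pm (r(x := va)) (r'(x := vb))) (pm m1a m1b) (cm M2a M2b) =
       omeet (fc T2a (r(x := va)) m1a M2a) (fc T2b (r'(x := vb)) m1b M2b)"
      using eLetS(4)[of "r(x := va)" m1a M2a T2a "r'(x := vb)" m1b M2b T2b] eLetS.prems eq ea eb va vb
        env_upd_le[of r _ va v x] env_upd_le[of r' _ vb v x] by (auto simp: fun_upd_def)
    show ?thesis using eq f1a f1b ih1 ih2 va vb by (simp add: pm_upd)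
  qed
next
  case (eTryF T1 \<rho> \<mu> M1 \<mu>' v T2 x M2 \<mu>'' R)
  have ev: "eval (TTryF T1 x T2) \<rho> \<mu> (Try M1 x M2) \<mu>'' R" using eval.eTryF[OF eTryF(1,3)] .
  show ?case
  proof (cases "M = CHole \<or> M' = CHole \<or> (\<exists>k L. T = THole k L) \<or> (\<exists>k L. T' = THole k L)")
    case True then show ?thesis using HM0[OF ev eTryF.prems] by blast
  next
    case False
    then obtain M1a M2a T1a T2a M1b M2b T1b T2b where eq: "M = Try M1a x M2a" "T = TTryF T1a x T2a"
      "M' = Try M1b x M2b" "T' = TTryF T1b x T2b"
      "comp_le M1a M1" "comp_le M2a M2" "trace_le T1a T1" "trace_le T2a T2"
      "comp_le M1b M1" "comp_le M2b M2" "trace_le T1b T1" "trace_le T2b T2"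
      using eTryF.prems by (auto elim!: comp_leE2 trace_leE2)
    obtain m1a R1a where f1a: "fc T1a r m M1a = (m1a, R1a)" by fastforce
    obtain m1b R1b where f1b: "fc T1b r' m' M1b = (m1b, R1b)" by fastforce
    have ea: "store_le m1a \<mu>'" "res_le R1a (Res OExn v)"
      using fc_ex[OF eTryF(1), of r m M1a T1a] eTryF.prems eq f1a by auto
    then obtain va where va: "R1a = Res OExn va" "val_le va v" using res_ex by blast
    have eb: "store_le m1b \<mu>'" "res_le R1b (Res OExn v)"
      using fc_ex[OF eTryF(1), of r' m' M1b T1b] eTryF.prems eq f1b by auto
    then obtain vb where vb: "R1b = Res OExn vb" "val_le vb v" using res_ex by blast
    have ih1: "fc (tm T1a T1b) (pm r r') (pm m m') (cm M1a M1b) = (pm m1a m1b, Res OExn (vm va vb))"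
      using eTryF(2)[of r m M1a T1a r' m' M1b T1b] eTryF.prems eq f1a f1b va vb by auto
    have ih2: "fc (tm T2a T2b) (pm (r(x := va)) (r'(x := vb))) (pm m1a m1b) (cm M2a M2b) =
       omeet (fc T2a (r(x := va)) m1a M2a) (fc T2b (r'(x := vb)) m1b M2b)"
      using eTryF(4)[of "r(x := va)" m1a M2a T2a "r'(x := vb)" m1b M2b T2b] eTryF.prems eq ea eb va vb
        env_upd_le[of r _ va v x] env_upd_le[of r' _ vb v x] by (auto simp: fun_upd_def)
    show ?thesis using eq f1a f1b ih1 ih2 va vb by (simp add: pm_upd)
  qed
next
  case (eLetF T1 \<rho> \<mu> M1 \<mu>' v x M2)
  have ev: "eval (TLetF T1) \<rho> \<mu> (Let x M1 M2) \<mu>' (Res OExn v)" using eval.eLetF[OF eLetF(1)] .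
  show ?case
  proof (cases "M = CHole \<or> M' = CHole \<or> (\<exists>k L. T = THole k L) \<or> (\<exists>k L. T' = THole k L)")
    case True then show ?thesis using HM0[OF ev eLetF.prems] by blast
  next
    case False
    then obtain M1a M2a T1a M1b M2b T1b where eq: "M = Let x M1a M2a" "T = TLetF T1a"
      "M' = Let x M1b M2b" "T' = TLetF T1b"
      "comp_le M1a M1" "trace_le T1a T1" "comp_le M1b M1" "trace_le T1b T1"
      using eLetF.prems by (auto elim!: comp_leE2 trace_leE2)
    show ?thesis using eLetF(2)[of r m M1a T1a r' m' M1b T1b] eLetF.prems eq by auto
  qed
next
  case (eTryS T1 \<rho> \<mu> M1 \<mu>' v x M2)
  have ev: "eval (TTryS T1) \<rho> \<mu> (Try M1 x M2) \<mu>' (Res OVal v)" using eval.eTryS[OF eTryS(1)] .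
  show ?case
  proof (cases "M = CHole \<or> M' = CHole \<or> (\<exists>k L. T = THole k L) \<or> (\<exists>k L. T' = THole k L)")
    case True then show ?thesis using HM0[OF ev eTryS.prems] by blast
  next
    case False
    then obtain M1a M2a T1a M1b M2b T1b where eq: "M = Try M1a x M2a" "T = TTryS T1a"
      "M' = Try M1b x M2b" "T' = TTryS T1b"
      "comp_le M1a M1" "trace_le T1a T1" "comp_le M1b M1" "trace_le T1b T1"
      using eTryS.prems by (auto elim!: comp_leE2 trace_leE2)
    show ?thesis using eTryS(2)[of r m M1a T1a r' m' M1b T1b] eTryS.prems eq by auto
  qed
next
  case (eCaseL \<rho> e v T1 x \<mu> M1 \<mu>' R y M2)
  have ev: "eval (TCaseL e x T1 y) \<rho> \<mu> (Case e x M1 y M2) \<mu>' R" using eval.eCaseL[OF eCaseL(1,2)] .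
  show ?case
  proof (cases "M = CHole \<or> M' = CHole \<or> (\<exists>k L. T = THole k L) \<or> (\<exists>k L. T' = THole k L)")
    case True then show ?thesis using HM0[OF ev eCaseL.prems] by blast
  next
    case False
    then obtain ea eb ta tb M1a M2a T1a M1b M2b T1b where eq: "M = Case ea x M1a y M2a" "T = TCaseL ta x T1a y"
      "M' = Case eb x M1b y M2b" "T' = TCaseL tb x T1b y"
      "exp_le ea e" "exp_le eb e" "comp_le M1a M1" "trace_le T1a T1" "comp_le M1b M1" "trace_le T1b T1"
      using eCaseL.prems by (auto elim!: comp_leE2 trace_leE2)
    have a: "val_le (fe r ea) (VInl v)" using fe_ex[OF eCaseL(1) eq(5) eCaseL.prems(1)] by auto
    have b: "val_le (fe r' eb) (VInl v)" using fe_ex[OF eCaseL(1) eq(6) eCaseL.prems(5)] by auto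
    have fm: "fe (pm r r') (em ea eb) = vm (fe r ea) (fe r' eb)"
      using fe_meet[OF eCaseL(1) eq(5,6) eCaseL.prems(1,5)] .
    have w: "writes T1a = writes T1" "trace_outcome T1a = trace_outcome T1"
      "writes T1b = writes T1" "trace_outcome T1b = trace_outcome T1"
      using tle_wo[OF eq(8)] tle_wo[OF eq(10)] by auto
    show ?thesis
    proof (cases "fe r ea = VHole \<or> fe r' eb = VHole")
      case True
      show ?thesis
      proof (rule HM[OF ev eCaseL.prems])
        show "fc T r m M = (erase m (writes (TCaseL e x T1 y)), Res (trace_outcome (TCaseL e x T1 y)) VHole) \<or>
          fc T' r' m' M' = (erase m' (writes (TCaseL e x T1 y)), Res (trace_outcome (TCaseL e x T1 y)) VHole)"
          using True eq w vle_inl[OF a] vle_inl[OF b] by (auto simp: hr_def)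
        show "fc (tm T T') (pm r r') (pm m m') (cm M M') =
          (erase (pm m m') (writes (TCaseL e x T1 y)), Res (trace_outcome (TCaseL e x T1 y)) VHole)"
          using True eq w fm by (auto simp: hr_def tm_w)
      qed
    next
      case False
      then obtain va vb where v: "fe r ea = VInl va" "val_le va v" "fe r' eb = VInl vb" "val_le vb v"
        using vle_inl[OF a] vle_inl[OF b] by auto
      have ih: "fc (tm T1a T1b) (pm (r(x := va)) (r'(x := vb))) (pm m m') (cm M1a M1b) =
         omeet (fc T1a (r(x := va)) m M1a) (fc T1b (r'(x := vb)) m' M1b)"
        using eCaseL(3)[of "r(x := va)" m M1a T1a "r'(x := vb)" m' M1b T1b] eCaseL.prems eq v
          env_upd_le[of r _ va v x] env_upd_le[of r' _ vb v x] by (auto simp: fun_upd_def)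
      show ?thesis using eq v fm ih by (simp add: pm_upd)
    qed
  qed
next
  case (eCaseR \<rho> e v T1 y \<mu> M2 \<mu>' R x M1)
  have ev: "eval (TCaseR e x y T1) \<rho> \<mu> (Case e x M1 y M2) \<mu>' R" using eval.eCaseR[OF eCaseR(1,2)] .
  show ?case
  proof (cases "M = CHole \<or> M' = CHole \<or> (\<exists>k L. T = THole k L) \<or> (\<exists>k L. T' = THole k L)")
    case True then show ?thesis using HM0[OF ev eCaseR.prems] by blast
  next
    case False
    then obtain ea eb ta tb M1a M2a T1a M1b M2b T1b where eq: "M = Case ea x M1a y M2a" "T = TCaseR ta x y T1a"
      "M' = Case eb x M1b y M2b" "T' = TCaseR tb x y T1b"
      "exp_le ea e" "exp_le eb e" "comp_le M2a M2" "trace_le T1a T1" "comp_le M2b M2" "trace_le T1b T1"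
      using eCaseR.prems by (auto elim!: comp_leE2 trace_leE2)
    have a: "val_le (fe r ea) (VInr v)" using fe_ex[OF eCaseR(1) eq(5) eCaseR.prems(1)] by auto
    have b: "val_le (fe r' eb) (VInr v)" using fe_ex[OF eCaseR(1) eq(6) eCaseR.prems(5)] by auto
    have fm: "fe (pm r r') (em ea eb) = vm (fe r ea) (fe r' eb)"
      using fe_meet[OF eCaseR(1) eq(5,6) eCaseR.prems(1,5)] .
    have w: "writes T1a = writes T1" "trace_outcome T1a = trace_outcome T1"
      "writes T1b = writes T1" "trace_outcome T1b = trace_outcome T1"
      using tle_wo[OF eq(8)] tle_wo[OF eq(10)] by auto
    show ?thesis
    proof (cases "fe r ea = VHole \<or> fe r' eb = VHole")
      case True
      show ?thesis
      proof (rule HM[OF ev eCaseR.prems])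
        show "fc T r m M = (erase m (writes (TCaseR e x y T1)), Res (trace_outcome (TCaseR e x y T1)) VHole) \<or>
          fc T' r' m' M' = (erase m' (writes (TCaseR e x y T1)), Res (trace_outcome (TCaseR e x y T1)) VHole)"
          using True eq w vle_inr[OF a] vle_inr[OF b] by (auto simp: hr_def)
        show "fc (tm T T') (pm r r') (pm m m') (cm M M') =
          (erase (pm m m') (writes (TCaseR e x y T1)), Res (trace_outcome (TCaseR e x y T1)) VHole)"
          using True eq w fm by (auto simp: hr_def tm_w)
      qed
    next
      case False
      then obtain va vb where v: "fe r ea = VInr va" "val_le va v" "fe r' eb = VInr vb" "val_le vb v"
        using vle_inr[OF a] vle_inr[OF b] by auto
      have ih: "fc (tm T1a T1b) (pm (r(y := va)) (r'(y := vb))) (pm m m') (cm M2a M2b) =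
         omeet (fc T1a (r(y := va)) m M2a) (fc T1b (r'(y := vb)) m' M2b)"
        using eCaseR(3)[of "r(y := va)" m M2a T1a "r'(y := vb)" m' M2b T1b] eCaseR.prems eq v
          env_upd_le[of r _ va v y] env_upd_le[of r' _ vb v y] by (auto simp: fun_upd_def)
      show ?thesis using eq v fm ih by (simp add: pm_upd)
    qed
  qed
next
  case (eApp \<rho> e1 v1 \<rho>' f x Mb e2 v2 T1 \<mu> \<mu>' R)
  have ev: "eval (TApp e1 e2 f x T1) \<rho> \<mu> (App e1 e2) \<mu>' R" using eval.eApp[OF eApp(1,2,3,4)] .
  show ?case
  proof (cases "M = CHole \<or> M' = CHole \<or> (\<exists>k L. T = THole k L) \<or> (\<exists>k L. T' = THole k L)")
    case True then show ?thesis using HM0[OF ev eApp.prems] by blast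
  next
    case False
    then obtain ea eb ta tb ea2 eb2 ta2 tb2 T1a T1b where eq: "M = App ea ea2" "T = TApp ta ta2 f x T1a"
      "M' = App eb eb2" "T' = TApp tb tb2 f x T1b"
      "exp_le ea e1" "exp_le eb e1" "exp_le ea2 e2" "exp_le eb2 e2" "trace_le T1a T1" "trace_le T1b T1"
      using eApp.prems by (auto elim!: comp_leE2 trace_leE2)
    have a: "val_le (fe r ea) (VClo \<rho>' f x Mb)" using fe_ex[OF eApp(1) eq(5) eApp.prems(1)] eApp(2) by auto
    have b: "val_le (fe r' eb) (VClo \<rho>' f x Mb)" using fe_ex[OF eApp(1) eq(6) eApp.prems(5)] eApp(2) by auto
    have a2: "val_le (fe r ea2) v2" using fe_ex[OF eApp(3) eq(7) eApp.prems(1)] by auto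
    have b2: "val_le (fe r' eb2) v2" using fe_ex[OF eApp(3) eq(8) eApp.prems(5)] by auto
    have fm: "fe (pm r r') (em ea eb) = vm (fe r ea) (fe r' eb)"
      using fe_meet[OF eApp(1) eq(5,6) eApp.prems(1,5)] .
    have fm2: "fe (pm r r') (em ea2 eb2) = vm (fe r ea2) (fe r' eb2)"
      using fe_meet[OF eApp(3) eq(7,8) eApp.prems(1,5)] .
    have w: "writes T1a = writes T1" "trace_outcome T1a = trace_outcome T1"
      "writes T1b = writes T1" "trace_outcome T1b = trace_outcome T1"
      using tle_wo[OF eq(9)] tle_wo[OF eq(10)] by auto
    show ?thesis
    proof (cases "fe r ea = VHole \<or> fe r' eb = VHole")
      case True
      show ?thesis
      proof (rule HM[OF ev eApp.prems])
        show "fc T r m M = (erase m (writes (TApp e1 e2 f x T1)), Res (trace_outcome (TApp e1 e2 f x T1)) VHole) \<or>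
          fc T' r' m' M' = (erase m' (writes (TApp e1 e2 f x T1)), Res (trace_outcome (TApp e1 e2 f x T1)) VHole)"
          using True eq w by (auto simp: hr_def)
        show "fc (tm T T') (pm r r') (pm m m') (cm M M') =
          (erase (pm m m') (writes (TApp e1 e2 f x T1)), Res (trace_outcome (TApp e1 e2 f x T1)) VHole)"
          using True eq w fm by (auto simp: hr_def tm_w)
      qed
    next
      case False
      then obtain ra Ma rb Mb' where c: "fe r ea = VClo ra f x Ma" "env_le ra \<rho>'" "comp_le Ma Mb"
          "fe r' eb = VClo rb f x Mb'" "env_le rb \<rho>'" "comp_le Mb' Mb"
        using vle_clo[OF a] vle_clo[OF b] by auto
      have envA: "env_le ((ra(f := fe r ea))(x := fe r ea2)) ((\<rho>'(f := v1))(x := v2))"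
        using c a a2 eApp(2) by (auto intro!: env_upd_le)
      have envB: "env_le ((rb(f := fe r' eb))(x := fe r' eb2)) ((\<rho>'(f := v1))(x := v2))"
        using c b b2 eApp(2) by (auto intro!: env_upd_le)
      have ih: "fc (tm T1a T1b) (pm ((ra(f := fe r ea))(x := fe r ea2)) ((rb(f := fe r' eb))(x := fe r' eb2))) (pm m m') (cm Ma Mb') =
         omeet (fc T1a ((ra(f := fe r ea))(x := fe r ea2)) m Ma) (fc T1b ((rb(f := fe r' eb))(x := fe r' eb2)) m' Mb')"
        using eApp(5)[OF envA eApp.prems(2) c(3) eq(9) envB eApp.prems(6) c(6) eq(10)]
        by (simp add: fun_upd_def)
      note ih2 = ih[unfolded pm_upd c(1) c(4) vm_clo]
      have fm': "fe (pm r r') (em ea eb) = VClo (pm ra rb) f x (cm Ma Mb')"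
        using fm c by (simp add: pm_def)
      show ?thesis using eq c fm' fm2 ih2 by (simp del: vm.simps add: vm_clo)
    qed
  qed
qed


lemma fwd_eq: "eval T0 r0 m0 M0 m2 R2 \<Longrightarrow> env_le r r0 \<Longrightarrow> store_le m m0 \<Longrightarrow> comp_le M M0 \<Longrightarrow> trace_le T T0 \<Longrightarrow>
  fwd (r, m, M, T) = fc T r m M"
proof -
  assume a: "eval T0 r0 m0 M0 m2 R2" "env_le r r0" "store_le m m0" "comp_le M M0" "trace_le T T0"
  have ex: "fwd_comp r m M T (fst (fc T r m M)) (snd (fc T r m M))" using fc_ex[OF a] by auto
  show ?thesis unfolding fwd.simps
  proof (rule the_equality)
    show "case fc T r m M of (a, b) \<Rightarrow> fwd_comp r m M T a b" using ex by (cases "fc T r m M") auto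
  next
    fix p assume "case p of (a, b) \<Rightarrow> fwd_comp r m M T a b"
    then show "p = fc T r m M" by (cases p) (auto dest: fc_eq)
  qed
qed

theorem lemma4p4:
  assumes "eval T \<rho> \<mu>1 M \<mu>2 R"
    and "cfg_le x (\<rho>, \<mu>1, M, T)"
    and "cfg_le x' (\<rho>, \<mu>1, M, T)"
  shows "fwd (prefix_meet cfg_le (\<rho>, \<mu>1, M, T) x x')
           = prefix_meet out_le (\<mu>2, R) (fwd x) (fwd x')"
proof -
  obtain r m Mx Tx where x: "x = (r, m, Mx, Tx)" by (cases x) auto
  obtain r' m' Mx' Tx' where x': "x' = (r', m', Mx', Tx')" by (cases x') auto
  have p1: "env_le r \<rho>" "store_le m \<mu>1" "comp_le Mx M" "trace_le Tx T" using assms(2) x by auto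
  have p2: "env_le r' \<rho>" "store_le m' \<mu>1" "comp_le Mx' M" "trace_le Tx' T" using assms(3) x' by auto
  have pm1: "env_le (pm r r') \<rho>" using p1(1) by (auto simp: env_le_def pm_def intro: val_trans[OF vm_le1])
  have pm2: "store_le (pm m m') \<mu>1" using p1(2) by (auto simp: store_le_def pm_def intro: val_trans[OF vm_le1])
  have pm3: "comp_le (cm Mx Mx') M" using elc_trans(2)[OF em_le1(2) p1(3)] .
  have pm4: "trace_le (tm Tx Tx') T" using trace_trans[OF tm_le1 p1(4)] .
  have "prefix_meet cfg_le (\<rho>, \<mu>1, M, T) x x' = (pm r r', pm m m', cm Mx Mx', tm Tx Tx')"
    using meet_cfg[OF assms(2,3)] x x' by simp
  then have "fwd (prefix_meet cfg_le (\<rho>, \<mu>1, M, T) x x') = fc (tm Tx Tx') (pm r r') (pm m m') (cm Mx Mx')"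
    using fwd_eq[OF assms(1) pm1 pm2 pm3 pm4] by simp
  also have "\<dots> = omeet (fc Tx r m Mx) (fc Tx' r' m' Mx')"
    using fc_meet[OF assms(1) p1 p2] .
  also have "\<dots> = prefix_meet out_le (\<mu>2, R) (fwd x) (fwd x')"
  proof -
    have f1: "fwd x = fc Tx r m Mx" using fwd_eq[OF assms(1) p1] x by simp
    have f2: "fwd x' = fc Tx' r' m' Mx'" using fwd_eq[OF assms(1) p2] x' by simp
    have o1: "out_le (fc Tx r m Mx) (\<mu>2, R)" using fc_ex[OF assms(1) p1] by auto
    have o2: "out_le (fc Tx' r' m' Mx') (\<mu>2, R)" using fc_ex[OF assms(1) p2] by auto
    show ?thesis using meet_out[OF o1 o2] f1 f2 by simp
  qed
  finally show ?thesis .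
qed


end
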